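(* Let $X$ be an affine algebraic manifold whose group $\mathrm{Aut}\,X$ of algebraic automorphisms acts transitively on $X$, and let $T$ be the $\mathbb C[X]$-module of all algebraic vector fields on $X$. Suppose there is a $\mathbb C[X]$-submodule $L\subset T$ such that $L\subset\mathrm{Lie}_{alg}(X)$ and such that the fiber $\{\nu(x_0):\nu\in L\}$ of $L$ at some point $x_0\in X$ contains a generating subset of $T_{x_0}X$. Then $X$ has the algebraic density property.
   Context: $\mathbb C[X]$ is the algebra of regular functions. An algebraic vector field is completely integrable if its (holomorphic) flow exists for all complex times. $\mathrm{Lie}_{alg}(X)$ is the Lie algebra generated by completely integrable algebraic vector fields on $X$; $X$ has the algebraic density property if $\mathrm{Lie}_{alg}(X)$ equals the Lie algebra of all algebraic vector fields on $X$. A finite subset $F\subset T_{x_0}X$ is a generating subset if the linear span of its orbit under the (differentials of the) isotropy group $(\mathrm{Aut}\,X)_{x_0}$ is all of $T_{x_0}X$. *)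

theory Defs
  imports "HOL-Analysis.Analysis"
begin

text \<open>Points of the ambient affine space C^n, with n = CARD('n) for a finite index type 'n.\<close>
type_synonym 'n pt = "'n \<Rightarrow> complex"
type_synonym 'n fn = "'n pt \<Rightarrow> complex"
type_synonym 'n vfield = "'n \<Rightarrow> 'n fn"

inductive_set poly_fun :: "('n::finite) fn set" where
  const: "(\<lambda>x. c) \<in> poly_fun"
| coord: "(\<lambda>x. x i) \<in> poly_fun"
| add: "p \<in> poly_fun \<Longrightarrow> q \<in> poly_fun \<Longrightarrow> (\<lambda>x. p x + q x) \<in> poly_fun"
| mult: "p \<in> poly_fun \<Longrightarrow> q \<in> poly_fun \<Longrightarrow> (\<lambda>x. p x * q x) \<in> poly_fun"

definition algebraic_set :: "('n::finite) pt set \<Rightarrow> bool" where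
  "algebraic_set X \<longleftrightarrow> (\<exists>F. F \<subseteq> poly_fun \<and> X = {x. \<forall>f\<in>F. f x = 0})"

definition van_ideal :: "('n::finite) pt set \<Rightarrow> 'n fn set" where
  "van_ideal X = {f \<in> poly_fun. \<forall>x\<in>X. f x = 0}"

text \<open>Regular functions C[X], represented as restrictions of polynomials, extended by 0 off X.\<close>
definition reg :: "('n::finite) pt set \<Rightarrow> 'n fn set" where
  "reg X = {g. \<exists>p\<in>poly_fun. g = (\<lambda>x. if x \<in> X then p x else 0)}"

definition pd :: "('n::finite) fn \<Rightarrow> 'n \<Rightarrow> 'n pt \<Rightarrow> complex" where
  "pd f i x = deriv (\<lambda>t. f (x(i := t))) (x i)"

definition tangent_space :: "('n::finite) pt set \<Rightarrow> 'n pt \<Rightarrow> 'n pt set" where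
  "tangent_space X x0 = {v. \<forall>f\<in>van_ideal X. (\<Sum>j\<in>UNIV. pd f j x0 * v j) = 0}"

text \<open>Algebraic vector fields on X: tuples of regular functions tangent to X
  (these form the C[X]-module T of derivations of C[X]).\<close>
definition VF :: "('n::finite) pt set \<Rightarrow> 'n vfield set" where
  "VF X = {v. (\<forall>i. v i \<in> reg X) \<and>
     (\<forall>f\<in>van_ideal X. \<forall>x\<in>X. (\<Sum>j\<in>UNIV. v j x * pd f j x) = 0)}"

definition vf_apply :: "('n::finite) pt set \<Rightarrow> 'n vfield \<Rightarrow> 'n fn \<Rightarrow> 'n fn" where
  "vf_apply X v g = (let p = (SOME p. p \<in> poly_fun \<and> (\<forall>x\<in>X. g x = p x)) in
     (\<lambda>x. if x \<in> X then (\<Sum>j\<in>UNIV. v j x * pd p j x) else 0))"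

definition vf_bracket :: "('n::finite) pt set \<Rightarrow> 'n vfield \<Rightarrow> 'n vfield \<Rightarrow> 'n vfield" where
  "vf_bracket X v w = (\<lambda>i x. vf_apply X v (w i) x - vf_apply X w (v i) x)"

definition complete_vf :: "('n::finite) pt set \<Rightarrow> 'n vfield \<Rightarrow> bool" where
  "complete_vf X v \<longleftrightarrow> v \<in> VF X \<and>
     (\<forall>x\<in>X. \<exists>\<gamma>::complex \<Rightarrow> 'n pt. \<gamma> 0 = x \<and> (\<forall>t. \<gamma> t \<in> X) \<and>
        (\<forall>t i. ((\<lambda>s. \<gamma> s i) has_field_derivative v i (\<gamma> t)) (at t)))"

inductive_set Lie_alg :: "('n::finite) pt set \<Rightarrow> 'n vfield set" for X where
  gen: "complete_vf X v \<Longrightarrow> v \<in> Lie_alg X"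
| zero: "(\<lambda>i x. 0) \<in> Lie_alg X"
| add: "v \<in> Lie_alg X \<Longrightarrow> w \<in> Lie_alg X \<Longrightarrow> (\<lambda>i x. v i x + w i x) \<in> Lie_alg X"
| smult: "v \<in> Lie_alg X \<Longrightarrow> (\<lambda>i x. c * v i x) \<in> Lie_alg X"
| bracket: "v \<in> Lie_alg X \<Longrightarrow> w \<in> Lie_alg X \<Longrightarrow> vf_bracket X v w \<in> Lie_alg X"

definition algebraic_density_property :: "('n::finite) pt set \<Rightarrow> bool" where
  "algebraic_density_property X \<longleftrightarrow> Lie_alg X = VF X"

definition Aut :: "('n::finite) pt set \<Rightarrow> ('n pt \<Rightarrow> 'n pt) set" where
  "Aut X = {\<phi>. (\<forall>i. (\<lambda>x. \<phi> x i) \<in> poly_fun) \<and> \<phi> ` X \<subseteq> X \<and>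
     (\<exists>\<psi>. (\<forall>i. (\<lambda>x. \<psi> x i) \<in> poly_fun) \<and> \<psi> ` X \<subseteq> X \<and>
          (\<forall>x\<in>X. \<psi> (\<phi> x) = x) \<and> (\<forall>x\<in>X. \<phi> (\<psi> x) = x))}"

definition transitive_Aut :: "('n::finite) pt set \<Rightarrow> bool" where
  "transitive_Aut X \<longleftrightarrow> (\<forall>x\<in>X. \<forall>y\<in>X. \<exists>\<phi>\<in>Aut X. \<phi> x = y)"

definition differential :: "('n::finite pt \<Rightarrow> 'n pt) \<Rightarrow> 'n pt \<Rightarrow> 'n pt \<Rightarrow> 'n pt" where
  "differential \<phi> x0 v = (\<lambda>i. \<Sum>j\<in>UNIV. pd (\<lambda>x. \<phi> x i) j x0 * v j)"

definition cspan :: "('n::finite) pt set \<Rightarrow> 'n pt set" where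
  "cspan A = {v. \<exists>S c. finite S \<and> S \<subseteq> A \<and> v = (\<lambda>j. \<Sum>u\<in>S. c u * u j)}"

definition generating_subset :: "('n::finite) pt set \<Rightarrow> 'n pt \<Rightarrow> 'n pt set \<Rightarrow> bool" where
  "generating_subset X x0 F \<longleftrightarrow> finite F \<and> F \<subseteq> tangent_space X x0 \<and>
     cspan {differential \<phi> x0 v | \<phi> v. \<phi> \<in> Aut X \<and> \<phi> x0 = x0 \<and> v \<in> F} = tangent_space X x0"

definition submodule_VF :: "('n::finite) pt set \<Rightarrow> 'n vfield set \<Rightarrow> bool" where
  "submodule_VF X L \<longleftrightarrow> L \<subseteq> VF X \<and> (\<lambda>i x. 0) \<in> L \<and>
     (\<forall>v\<in>L. \<forall>w\<in>L. (\<lambda>i x. v i x + w i x) \<in> L) \<and>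
     (\<forall>h\<in>reg X. \<forall>v\<in>L. (\<lambda>i x. h x * v i x) \<in> L)"

end

theory Submission
  imports Defs "HOL-Library.Function_Algebras" "HOL-Computational_Algebra.Fundamental_Theorem_Algebra"
begin


section \<open>Polynomial calculus\<close>

lemma line_deriv:
  "((\<lambda>s. (x(j:=s)) k) has_field_derivative (if k = j then 1 else 0)) (at t)"
  by (cases "k = j") (auto intro!: derivative_eq_intros)

lemma line_sum:
  fixes a :: "'n::finite \<Rightarrow> complex"
  shows "(\<Sum>k\<in>UNIV. a k * (if k = j then (1::complex) else 0)) = a j"
  by (simp add: if_distrib cong: if_cong)

lemma line_from_curve:
  fixes p :: "('n::finite) fn"
  assumes "\<And>\<gamma> \<gamma>' t. (\<forall>j. ((\<lambda>s. \<gamma> s j) has_field_derivative \<gamma>' j) (at t)) \<Longrightarrow>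
     ((\<lambda>s. p (\<gamma> s)) has_field_derivative (\<Sum>j\<in>UNIV. pd p j (\<gamma> t) * \<gamma>' j)) (at t)"
  shows "((\<lambda>s. p (x(j:=s))) has_field_derivative pd p j x) (at (x j))"
proof -
  have d: "\<forall>k. ((\<lambda>s. (x(j:=s)) k) has_field_derivative (if k = j then 1 else 0)) (at (x j))"
    using line_deriv[of x j] by blast
  have "((\<lambda>s. p (x(j:=s))) has_field_derivative
     (\<Sum>k\<in>UNIV. pd p k (x(j:=x j)) * (if k = j then 1 else 0))) (at (x j))"
    by (rule assms[OF d])
  then show ?thesis by (simp only: line_sum fun_upd_triv)
qed

lemma poly_curve_aux:
  fixes p :: "('n::finite) fn"
  assumes "p \<in> poly_fun"
  shows "\<And>\<gamma> \<gamma>' t. (\<forall>j. ((\<lambda>s. \<gamma> s j) has_field_derivative \<gamma>' j) (at t)) \<Longrightarrow>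
     ((\<lambda>s. p (\<gamma> s)) has_field_derivative (\<Sum>j\<in>UNIV. pd p j (\<gamma> t) * \<gamma>' j)) (at t)"
  using assms
proof (induction)
  case (const c)
  have "pd (\<lambda>x. c) j y = 0" for j y by (simp add: pd_def)
  then show ?case by (simp add: pd_def)
next
  case (coord i)
  have e: "pd (\<lambda>x. x i) j y = (if j = i then 1 else 0)" for j y
    unfolding pd_def by (cases "i = j") auto
  have "(\<Sum>j\<in>UNIV. pd (\<lambda>x. x i) j (\<gamma> t) * \<gamma>' j) = \<gamma>' i"
    unfolding e using line_sum[of "\<lambda>j. \<gamma>' j" i] by (simp add: mult.commute)
  then show ?case using coord by simp
next
  case (add p q)
  have lp: "((\<lambda>s. p (x(j:=s))) has_field_derivative pd p j x) (at (x j))" for x j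
    by (rule line_from_curve) (rule add.IH(1))
  have lq: "((\<lambda>s. q (x(j:=s))) has_field_derivative pd q j x) (at (x j))" for x j
    by (rule line_from_curve) (rule add.IH(2))
  have e: "pd (\<lambda>x. p x + q x) j x = pd p j x + pd q j x" for j x
    unfolding pd_def[of "\<lambda>x. p x + q x"]
    by (rule DERIV_imp_deriv) (rule DERIV_add[OF lp lq])
  show ?case using DERIV_add[OF add.IH(1)[OF add.prems] add.IH(2)[OF add.prems]]
    by (simp add: e distrib_right sum.distrib)
next
  case (mult p q)
  have lp: "((\<lambda>s. p (x(j:=s))) has_field_derivative pd p j x) (at (x j))" for x j
    by (rule line_from_curve) (rule mult.IH(1))
  have lq: "((\<lambda>s. q (x(j:=s))) has_field_derivative pd q j x) (at (x j))" for x j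
    by (rule line_from_curve) (rule mult.IH(2))
  have e: "pd (\<lambda>x. p x * q x) j x = pd p j x * q x + p x * pd q j x" for j x
    unfolding pd_def[of "\<lambda>x. p x * q x"]
    by (rule DERIV_imp_deriv) (use DERIV_mult[OF lp[of x j] lq[of x j]] in \<open>simp add: mult.commute\<close>)
  show ?case using DERIV_mult[OF mult.IH(1)[OF mult.prems] mult.IH(2)[OF mult.prems]]
    by (simp add: e algebra_simps sum.distrib sum_distrib_left)
qed

lemma poly_curve:
  fixes p :: "('n::finite) fn"
  assumes "p \<in> poly_fun" "\<And>j. ((\<lambda>s. \<gamma> s j) has_field_derivative \<gamma>' j) (at t)"
  shows "((\<lambda>s. p (\<gamma> s)) has_field_derivative (\<Sum>j\<in>UNIV. pd p j (\<gamma> t) * \<gamma>' j)) (at t)"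
  using poly_curve_aux[OF assms(1)] assms(2) by blast

lemma poly_line:
  fixes p :: "('n::finite) fn"
  assumes "p \<in> poly_fun"
  shows "((\<lambda>s. p (x(j:=s))) has_field_derivative pd p j x) (at (x j))"
  by (rule line_from_curve) (rule poly_curve_aux[OF assms])

lemma pd_const[simp]: "pd (\<lambda>x. c) j = (\<lambda>x. 0)"
  by (rule ext) (simp add: pd_def)

lemma pd_coord: "pd (\<lambda>x. x i) j = (\<lambda>x. if i = j then 1 else 0)"
  by (rule ext) (cases "i = j"; simp add: pd_def)

lemma pd_add: "p \<in> poly_fun \<Longrightarrow> q \<in> poly_fun \<Longrightarrow>
   pd (\<lambda>x. p x + q x) j = (\<lambda>x. pd p j x + pd q j x)"
  by (rule ext, unfold pd_def[of "\<lambda>x. p x + q x"], rule DERIV_imp_deriv,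
      rule DERIV_add[OF poly_line poly_line]) auto

lemma pd_mult: assumes a: "p \<in> poly_fun" "q \<in> poly_fun"
  shows "pd (\<lambda>x. p x * q x) j = (\<lambda>x. pd p j x * q x + p x * pd q j x)"
proof (rule ext)
  fix x
  show "pd (\<lambda>x. p x * q x) j x = pd p j x * q x + p x * pd q j x"
    unfolding pd_def[of "\<lambda>x. p x * q x"]
    by (rule DERIV_imp_deriv) (use DERIV_mult[OF poly_line[OF a(1), of x j] poly_line[OF a(2), of x j]] in \<open>simp add: mult.commute\<close>)
qed
lemma poly_fun_neg: "p \<in> poly_fun \<Longrightarrow> (\<lambda>x. - p x) \<in> poly_fun"
  using poly_fun.mult[OF poly_fun.const[of "-1"]] by simp

lemma poly_fun_diff: "p \<in> poly_fun \<Longrightarrow> q \<in> poly_fun \<Longrightarrow> (\<lambda>x. p x - q x) \<in> poly_fun"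
  using poly_fun.add[OF _ poly_fun_neg] by simp

lemma poly_fun_smult: "p \<in> poly_fun \<Longrightarrow> (\<lambda>x. c * p x) \<in> poly_fun"
  by (rule poly_fun.mult[OF poly_fun.const])

lemma poly_fun_sum: "finite S \<Longrightarrow> (\<And>s. s \<in> S \<Longrightarrow> f s \<in> poly_fun) \<Longrightarrow> (\<lambda>x. \<Sum>s\<in>S. f s x) \<in> poly_fun"
  by (induction S rule: finite_induct) (auto intro: poly_fun.const poly_fun.add)

lemma poly_fun_prod: "finite S \<Longrightarrow> (\<And>s. s \<in> S \<Longrightarrow> f s \<in> poly_fun) \<Longrightarrow> (\<lambda>x. \<Prod>s\<in>S. f s x) \<in> poly_fun"
  by (induction S rule: finite_induct) (auto intro: poly_fun.const poly_fun.mult)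

lemma pd_poly: "p \<in> poly_fun \<Longrightarrow> pd p j \<in> poly_fun"
proof (induction rule: poly_fun.induct)
  case (const c) then show ?case by (simp add: poly_fun.const)
next
  case (coord i) then show ?case by (simp add: pd_coord poly_fun.const)
next
  case (add p q) then show ?case by (simp add: pd_add poly_fun.add)
next
  case (mult p q) then show ?case by (simp add: pd_mult poly_fun.add poly_fun.mult)
qed

lemma poly_comp:
  assumes "p \<in> poly_fun" "\<And>i. (\<lambda>x. \<Phi> x i) \<in> poly_fun"
  shows "(\<lambda>x. p (\<Phi> x)) \<in> poly_fun"
  using assms(1) by induction (auto intro: poly_fun.intros assms(2))

lemma pd_comp:
  fixes \<Phi> :: "('n::finite) pt \<Rightarrow> ('m::finite) pt"
  assumes "p \<in> poly_fun" "\<And>i. (\<lambda>x. \<Phi> x i) \<in> poly_fun"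
  shows "pd (\<lambda>x. p (\<Phi> x)) j x = (\<Sum>k\<in>UNIV. pd p k (\<Phi> x) * pd (\<lambda>x. \<Phi> x k) j x)"
proof -
  have "((\<lambda>s. p (\<Phi> (x(j:=s)))) has_field_derivative
      (\<Sum>k\<in>UNIV. pd p k (\<Phi> (x(j:=x j))) * pd (\<lambda>x. \<Phi> x k) j x)) (at (x j))"
    by (rule poly_curve[OF assms(1)]) (rule poly_line[OF assms(2)])
  then show ?thesis unfolding pd_def[of "\<lambda>x. p (\<Phi> x)"] by (simp add: DERIV_imp_deriv)
qed

lemma pd_pd_sym: "p \<in> poly_fun \<Longrightarrow> pd (pd p i) j = pd (pd p j) i"
proof (induction rule: poly_fun.induct)
  case (const c) then show ?case by simp
next
  case (coord k) then show ?case by (simp add: pd_coord)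
next
  case (add p q) then show ?case by (simp add: pd_add pd_poly)
next
  case (mult p q)
  then show ?case
    by (simp add: pd_add pd_mult pd_poly poly_fun.mult algebra_simps)
qed


section \<open>Regular functions, vector fields\<close>

lemma pd_diff: "p \<in> poly_fun \<Longrightarrow> q \<in> poly_fun \<Longrightarrow> pd (\<lambda>x. p x - q x) j = (\<lambda>x. pd p j x - pd q j x)"
  using pd_add[of p "\<lambda>x. - q x" j] pd_mult[of "\<lambda>x. -1" q j] poly_fun_neg[of q]
  by (simp add: poly_fun.const)

lemma pd_smult: "p \<in> poly_fun \<Longrightarrow> pd (\<lambda>x. c * p x) j = (\<lambda>x. c * pd p j x)"
  using pd_mult[of "\<lambda>x. c" p j] by (simp add: poly_fun.const)

lemma pd_sum: "finite S \<Longrightarrow> (\<And>s. s \<in> S \<Longrightarrow> f s \<in> poly_fun) \<Longrightarrow>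
   pd (\<lambda>x. \<Sum>s\<in>S. f s x) j = (\<lambda>x. \<Sum>s\<in>S. pd (f s) j x)"
proof (induction S rule: finite_induct)
  case empty then show ?case by simp
next
  case (insert a S)
  have "pd (\<lambda>x. \<Sum>s\<in>insert a S. f s x) j = pd (\<lambda>x. f a x + (\<Sum>s\<in>S. f s x)) j"
    using insert by simp
  also have "\<dots> = (\<lambda>x. pd (f a) j x + pd (\<lambda>x. \<Sum>s\<in>S. f s x) j x)"
    using insert by (intro pd_add) (auto intro: poly_fun_sum)
  finally show ?case using insert by simp
qed

lemma van_ideal_poly: "f \<in> van_ideal X \<Longrightarrow> f \<in> poly_fun"
  by (simp add: van_ideal_def)

lemma van_idealI: "f \<in> poly_fun \<Longrightarrow> (\<And>x. x \<in> X \<Longrightarrow> f x = 0) \<Longrightarrow> f \<in> van_ideal X"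
  by (simp add: van_ideal_def)

lemma regI: "p \<in> poly_fun \<Longrightarrow> (\<lambda>x. if x \<in> X then p x else 0) \<in> reg X"
  by (auto simp: reg_def)

lemma regE: "g \<in> reg X \<Longrightarrow> (\<And>p. p \<in> poly_fun \<Longrightarrow> g = (\<lambda>x. if x \<in> X then p x else 0) \<Longrightarrow> thesis) \<Longrightarrow> thesis"
  by (auto simp: reg_def)

lemma reg_out: "g \<in> reg X \<Longrightarrow> x \<notin> X \<Longrightarrow> g x = 0"
  by (auto simp: reg_def)

lemma reg_iff: "g \<in> reg X \<longleftrightarrow> (\<exists>p\<in>poly_fun. (\<forall>x\<in>X. g x = p x)) \<and> (\<forall>x. x \<notin> X \<longrightarrow> g x = 0)"
  unfolding reg_def by (auto intro!: ext)

lemma VF_reg: "v \<in> VF X \<Longrightarrow> v i \<in> reg X"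
  by (simp add: VF_def)

lemma VF_out: "v \<in> VF X \<Longrightarrow> x \<notin> X \<Longrightarrow> v i x = 0"
  by (rule reg_out[OF VF_reg])

lemma VF_tan: "v \<in> VF X \<Longrightarrow> f \<in> van_ideal X \<Longrightarrow> x \<in> X \<Longrightarrow> (\<Sum>j\<in>UNIV. v j x * pd f j x) = 0"
  by (simp add: VF_def)

lemma VF_rep: "v \<in> VF X \<Longrightarrow> \<exists>P. \<forall>i. P i \<in> poly_fun \<and> (\<forall>x\<in>X. v i x = P i x)"
proof -
  assume "v \<in> VF X"
  then have "\<forall>i. \<exists>p. p \<in> poly_fun \<and> (\<forall>x\<in>X. v i x = p x)"
    by (metis (no_types, lifting) VF_reg regE)
  then show ?thesis by metis
qed

lemma rep_indep:
  assumes v: "v \<in> VF X" and p: "p \<in> poly_fun" and q: "q \<in> poly_fun"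
    and eq: "\<And>x. x \<in> X \<Longrightarrow> p x = q x" and y: "y \<in> X"
  shows "(\<Sum>j\<in>UNIV. v j y * pd p j y) = (\<Sum>j\<in>UNIV. v j y * pd q j y)"
proof -
  have "(\<lambda>x. p x - q x) \<in> van_ideal X" using eq by (auto intro!: van_idealI poly_fun_diff p q)
  from VF_tan[OF v this y] show ?thesis
    by (simp add: pd_diff[OF p q] right_diff_distrib sum_subtractf)
qed

lemma vf_apply_eq:
  assumes v: "v \<in> VF X" and p: "p \<in> poly_fun" and eq: "\<And>x. x \<in> X \<Longrightarrow> g x = p x"
  shows "vf_apply X v g y = (if y \<in> X then (\<Sum>j\<in>UNIV. v j y * pd p j y) else 0)"
proof -
  define q where "q = (SOME p. p \<in> poly_fun \<and> (\<forall>x\<in>X. g x = p x))"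
  have "q \<in> poly_fun \<and> (\<forall>x\<in>X. g x = q x)" unfolding q_def
    by (rule someI_ex[of "\<lambda>p. p \<in> poly_fun \<and> (\<forall>x\<in>X. g x = p x)"]) (use p eq in blast)
  then have q: "q \<in> poly_fun" "\<forall>x\<in>X. g x = q x" by auto
  show ?thesis
    unfolding vf_apply_def Let_def q_def[symmetric]
    using rep_indep[OF v q(1) p] q(2) eq by auto
qed

lemma vf_apply_reg:
  assumes v: "v \<in> VF X" and g: "g \<in> reg X"
  shows "vf_apply X v g \<in> reg X"
proof -
  obtain p where p: "p \<in> poly_fun" "g = (\<lambda>x. if x \<in> X then p x else 0)" using g by (rule regE)
  obtain P where P: "\<And>i. P i \<in> poly_fun" "\<And>i x. x \<in> X \<Longrightarrow> v i x = P i x" using VF_rep[OF v] by metis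
  have "vf_apply X v g = (\<lambda>y. if y \<in> X then (\<Sum>j\<in>UNIV. P j y * pd p j y) else 0)"
    by (rule ext, subst vf_apply_eq[OF v p(1)]) (auto simp: p(2) P(2))
  then show ?thesis by (auto intro!: regI poly_fun_sum poly_fun.mult P pd_poly p)
qed

lemma VF_zero: "(\<lambda>i x. 0) \<in> VF X"
proof -
  have "(\<lambda>x. 0) \<in> reg X" using regI[OF poly_fun.const[of 0], of X] by simp
  then show ?thesis by (simp add: VF_def)
qed

lemma reg_op2:
  fixes X :: "('n::finite) pt set"
  assumes g: "g \<in> reg X" and h: "h \<in> reg X"
    and F: "\<And>p q :: 'n fn. p \<in> poly_fun \<Longrightarrow> q \<in> poly_fun \<Longrightarrow> (\<lambda>x. F (p x) (q x)) \<in> poly_fun"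
    and F0: "F 0 0 = 0"
  shows "(\<lambda>x. F (g x) (h x)) \<in> reg X"
proof -
  obtain p where p: "p \<in> poly_fun" "g = (\<lambda>x. if x \<in> X then p x else 0)" using g by (rule regE)
  obtain q where q: "q \<in> poly_fun" "h = (\<lambda>x. if x \<in> X then q x else 0)" using h by (rule regE)
  have "(\<lambda>x. F (g x) (h x)) = (\<lambda>x. if x \<in> X then F (p x) (q x) else 0)"
    using F0 by (auto simp: p q)
  then show ?thesis using regI[OF F[OF p(1) q(1)]] by simp
qed

lemma reg_add: "g \<in> reg X \<Longrightarrow> h \<in> reg X \<Longrightarrow> (\<lambda>x. g x + h x) \<in> reg X"
  by (rule reg_op2[where F="(+)"]) (auto intro: poly_fun.add)

lemma reg_mult: "g \<in> reg X \<Longrightarrow> h \<in> reg X \<Longrightarrow> (\<lambda>x. g x * h x) \<in> reg X"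
  by (rule reg_op2[where F="(*)"]) (auto intro: poly_fun.mult)

lemma reg_diff: "g \<in> reg X \<Longrightarrow> h \<in> reg X \<Longrightarrow> (\<lambda>x. g x - h x) \<in> reg X"
  by (rule reg_op2[where F="(-)"]) (auto intro: poly_fun_diff)

lemma reg_smult: "g \<in> reg X \<Longrightarrow> (\<lambda>x. c * g x) \<in> reg X"
  by (rule reg_op2[where F="\<lambda>a b. c * a" and h=g]) (auto intro: poly_fun_smult)

lemma reg_const: "(\<lambda>x. if x \<in> X then c else 0) \<in> reg X"
  by (rule regI[OF poly_fun.const])

lemma VF_add: "v \<in> VF X \<Longrightarrow> w \<in> VF X \<Longrightarrow> (\<lambda>i x. v i x + w i x) \<in> VF X"
  by (auto simp: VF_def reg_add distrib_right sum.distrib)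

lemma VF_smult: "v \<in> VF X \<Longrightarrow> (\<lambda>i x. c * v i x) \<in> VF X"
  by (auto simp: VF_def reg_smult mult.assoc sum_distrib_left[symmetric])

lemma VF_rmult: "h \<in> reg X \<Longrightarrow> v \<in> VF X \<Longrightarrow> (\<lambda>i x. h x * v i x) \<in> VF X"
  by (auto simp: VF_def reg_mult mult.assoc sum_distrib_left[symmetric])

lemma van_ideal_mult: "f \<in> van_ideal X \<Longrightarrow> g \<in> poly_fun \<Longrightarrow> (\<lambda>x. g x * f x) \<in> van_ideal X"
  by (auto simp: van_ideal_def intro: poly_fun.mult)

lemma bracket_VF:
  assumes v: "v \<in> VF X" and w: "w \<in> VF X"
  shows "vf_bracket X v w \<in> VF X"
proof -
  obtain V where V: "\<And>i. V i \<in> poly_fun" "\<And>i x. x \<in> X \<Longrightarrow> v i x = V i x" using VF_rep[OF v] by metis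
  obtain W where W: "\<And>i. W i \<in> poly_fun" "\<And>i x. x \<in> X \<Longrightarrow> w i x = W i x" using VF_rep[OF w] by metis
  have ap: "vf_apply X v (w i) x = (\<Sum>k\<in>UNIV. v k x * pd (W i) k x)"
    "vf_apply X w (v i) x = (\<Sum>k\<in>UNIV. w k x * pd (V i) k x)" if "x \<in> X" for i x
    using vf_apply_eq[OF v W(1), of "w i"] vf_apply_eq[OF w V(1), of "v i"] W(2) V(2) that by auto
  have regs: "vf_bracket X v w i \<in> reg X" for i
    unfolding vf_bracket_def by (intro reg_diff vf_apply_reg v w VF_reg)
  have tan: "(\<Sum>j\<in>UNIV. vf_bracket X v w j x * pd f j x) = 0" if f: "f \<in> van_ideal X" and x: "x \<in> X" for f x
  proof -
    have fp: "f \<in> poly_fun" using f by (rule van_ideal_poly)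
    define gw where "gw = (\<lambda>y. \<Sum>i\<in>UNIV. W i y * pd f i y)"
    define gv where "gv = (\<lambda>y. \<Sum>i\<in>UNIV. V i y * pd f i y)"
    have gwI: "gw \<in> van_ideal X"
      unfolding gw_def using VF_tan[OF w f] W(2)
      by (intro van_idealI poly_fun_sum poly_fun.mult W(1) pd_poly fp) auto
    have gvI: "gv \<in> van_ideal X"
      unfolding gv_def using VF_tan[OF v f] V(2)
      by (intro van_idealI poly_fun_sum poly_fun.mult V(1) pd_poly fp) auto
    have pdg: "pd gw k = (\<lambda>y. \<Sum>i\<in>UNIV. pd (W i) k y * pd f i y + W i y * pd (pd f i) k y)" for k
      unfolding gw_def by (subst pd_sum) (auto intro!: poly_fun.mult W(1) pd_poly fp simp: pd_mult W(1) pd_poly fp)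
    have pdg': "pd gv k = (\<lambda>y. \<Sum>i\<in>UNIV. pd (V i) k y * pd f i y + V i y * pd (pd f i) k y)" for k
      unfolding gv_def by (subst pd_sum) (auto intro!: poly_fun.mult V(1) pd_poly fp simp: pd_mult V(1) pd_poly fp)
    have e1: "(\<Sum>k\<in>UNIV. \<Sum>i\<in>UNIV. v k x * pd (W i) k x * pd f i x) +
              (\<Sum>k\<in>UNIV. \<Sum>i\<in>UNIV. v k x * W i x * pd (pd f i) k x) = 0"
      using VF_tan[OF v gwI x]
      by (simp add: pdg sum_distrib_left distrib_left sum.distrib mult.assoc)
    have e2: "(\<Sum>k\<in>UNIV. \<Sum>i\<in>UNIV. w k x * pd (V i) k x * pd f i x) +
              (\<Sum>k\<in>UNIV. \<Sum>i\<in>UNIV. w k x * V i x * pd (pd f i) k x) = 0"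
      using VF_tan[OF w gvI x]
      by (simp add: pdg' sum_distrib_left distrib_left sum.distrib mult.assoc)
    have sym: "(\<Sum>k\<in>UNIV. \<Sum>i\<in>UNIV. v k x * W i x * pd (pd f i) k x) =
               (\<Sum>k\<in>UNIV. \<Sum>i\<in>UNIV. w k x * V i x * pd (pd f i) k x)"
    proof -
      have "(\<Sum>k\<in>UNIV. \<Sum>i\<in>UNIV. v k x * W i x * pd (pd f i) k x) =
            (\<Sum>i\<in>UNIV. \<Sum>k\<in>UNIV. v k x * W i x * pd (pd f i) k x)"
        by (rule sum.swap)
      also have "\<dots> = (\<Sum>i\<in>UNIV. \<Sum>k\<in>UNIV. w i x * V k x * pd (pd f k) i x)"
        using V(2)[OF x] W(2)[OF x] pd_pd_sym[OF fp]
        by (intro sum.cong refl) (simp add: mult.commute)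
      finally show ?thesis .
    qed
    have a1: "(\<Sum>j\<in>UNIV. (\<Sum>k\<in>UNIV. v k x * pd (W j) k x) * pd f j x) =
              (\<Sum>k\<in>UNIV. \<Sum>i\<in>UNIV. v k x * pd (W i) k x * pd f i x)"
      by (simp add: sum_distrib_right) (rule sum.swap)
    have a2: "(\<Sum>j\<in>UNIV. (\<Sum>k\<in>UNIV. w k x * pd (V j) k x) * pd f j x) =
              (\<Sum>k\<in>UNIV. \<Sum>i\<in>UNIV. w k x * pd (V i) k x * pd f i x)"
      by (simp add: sum_distrib_right) (rule sum.swap)
    have "(\<Sum>j\<in>UNIV. vf_bracket X v w j x * pd f j x) =
       (\<Sum>j\<in>UNIV. (\<Sum>k\<in>UNIV. v k x * pd (W j) k x) * pd f j x) -
       (\<Sum>j\<in>UNIV. (\<Sum>k\<in>UNIV. w k x * pd (V j) k x) * pd f j x)"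
      by (simp add: vf_bracket_def ap x left_diff_distrib sum_subtractf)
    then show ?thesis using e1 e2 sym a1 a2 by (simp add: eq_neg_iff_add_eq_0[symmetric])
  qed
  show ?thesis using regs tan by (simp add: VF_def)
qed



lemma Lie_VF: "v \<in> Lie_alg X \<Longrightarrow> v \<in> VF X"
  by (induction rule: Lie_alg.induct)
     (auto simp: complete_vf_def VF_zero VF_add VF_smult bracket_VF)

section \<open>Pushforward by automorphisms\<close>

definition inv_aut :: "('n::finite) pt set \<Rightarrow> ('n pt \<Rightarrow> 'n pt) \<Rightarrow> ('n pt \<Rightarrow> 'n pt)" where
  "inv_aut X \<phi> = (SOME \<psi>. (\<forall>i. (\<lambda>x. \<psi> x i) \<in> poly_fun) \<and> \<psi> ` X \<subseteq> X \<and>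
          (\<forall>x\<in>X. \<psi> (\<phi> x) = x) \<and> (\<forall>x\<in>X. \<phi> (\<psi> x) = x))"

lemma aut_poly: "\<phi> \<in> Aut X \<Longrightarrow> (\<lambda>x. \<phi> x i) \<in> poly_fun"
  by (simp add: Aut_def)

lemma aut_X: "\<phi> \<in> Aut X \<Longrightarrow> x \<in> X \<Longrightarrow> \<phi> x \<in> X"
  by (auto simp: Aut_def)

lemma inv_aut:
  assumes "\<phi> \<in> Aut X"
  shows "\<And>i. (\<lambda>x. inv_aut X \<phi> x i) \<in> poly_fun" "\<And>x. x \<in> X \<Longrightarrow> inv_aut X \<phi> x \<in> X"
    "\<And>x. x \<in> X \<Longrightarrow> inv_aut X \<phi> (\<phi> x) = x" "\<And>x. x \<in> X \<Longrightarrow> \<phi> (inv_aut X \<phi> x) = x"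
proof -
  have "\<exists>\<psi>. (\<forall>i. (\<lambda>x. \<psi> x i) \<in> poly_fun) \<and> \<psi> ` X \<subseteq> X \<and>
          (\<forall>x\<in>X. \<psi> (\<phi> x) = x) \<and> (\<forall>x\<in>X. \<phi> (\<psi> x) = x)" using assms by (simp add: Aut_def)
  from someI_ex[OF this] have h: "(\<forall>i. (\<lambda>x. inv_aut X \<phi> x i) \<in> poly_fun) \<and> inv_aut X \<phi> ` X \<subseteq> X \<and>
          (\<forall>x\<in>X. inv_aut X \<phi> (\<phi> x) = x) \<and> (\<forall>x\<in>X. \<phi> (inv_aut X \<phi> x) = x)"
    unfolding inv_aut_def .
  show "\<And>i. (\<lambda>x. inv_aut X \<phi> x i) \<in> poly_fun" "\<And>x. x \<in> X \<Longrightarrow> inv_aut X \<phi> x \<in> X"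
    "\<And>x. x \<in> X \<Longrightarrow> inv_aut X \<phi> (\<phi> x) = x" "\<And>x. x \<in> X \<Longrightarrow> \<phi> (inv_aut X \<phi> x) = x"
    using h by auto
qed

lemma inv_aut_Aut: "\<phi> \<in> Aut X \<Longrightarrow> inv_aut X \<phi> \<in> Aut X"
  using inv_aut[of \<phi> X] aut_poly[of \<phi> X] aut_X[of \<phi> X]
  unfolding Aut_def[of X] by (intro CollectI conjI exI[of _ \<phi>]) auto

definition Dm :: "(('n::finite) pt \<Rightarrow> 'n pt) \<Rightarrow> 'n \<Rightarrow> 'n \<Rightarrow> 'n fn" where
  "Dm \<phi> i j = pd (\<lambda>x. \<phi> x i) j"

definition push :: "('n::finite) pt set \<Rightarrow> ('n pt \<Rightarrow> 'n pt) \<Rightarrow> 'n vfield \<Rightarrow> 'n vfield" where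
  "push X \<phi> v = (\<lambda>i y. if y \<in> X then (\<Sum>j\<in>UNIV. Dm \<phi> i j (inv_aut X \<phi> y) * v j (inv_aut X \<phi> y)) else 0)"

lemma Dm_poly: "\<phi> \<in> Aut X \<Longrightarrow> Dm \<phi> i j \<in> poly_fun"
  unfolding Dm_def by (rule pd_poly[OF aut_poly])

lemma push_at:
  assumes "\<phi> \<in> Aut X" "x \<in> X"
  shows "push X \<phi> v i (\<phi> x) = (\<Sum>j\<in>UNIV. Dm \<phi> i j x * v j x)"
  using assms by (simp add: push_def aut_X inv_aut)

lemma comp_van:
  assumes "\<phi> \<in> Aut X" "f \<in> van_ideal X"
  shows "(\<lambda>x. f (\<phi> x)) \<in> van_ideal X"
  using assms poly_comp[of f \<phi>] aut_poly[of \<phi> X] by (auto simp: van_ideal_def aut_X)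

lemma push_VF:
  assumes phi: "\<phi> \<in> Aut X" and v: "v \<in> VF X"
  shows "push X \<phi> v \<in> VF X"
proof -
  define \<psi> where "\<psi> = inv_aut X \<phi>"
  note inv = inv_aut[OF phi, folded \<psi>_def]
  obtain P where P: "\<And>i. P i \<in> poly_fun" "\<And>i x. x \<in> X \<Longrightarrow> v i x = P i x" using VF_rep[OF v] by metis
  have regs: "push X \<phi> v i \<in> reg X" for i
  proof -
    have "push X \<phi> v i = (\<lambda>y. if y \<in> X then (\<Sum>j\<in>UNIV. Dm \<phi> i j (\<psi> y) * P j (\<psi> y)) else 0)"
      by (rule ext) (simp add: push_def \<psi>_def[symmetric] P(2) inv(2))
    moreover have "(\<lambda>y. \<Sum>j\<in>UNIV. Dm \<phi> i j (\<psi> y) * P j (\<psi> y)) \<in> poly_fun"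
      by (intro poly_fun_sum poly_fun.mult poly_comp[OF Dm_poly[OF phi]] poly_comp[OF P(1)] inv(1)) auto
    ultimately show ?thesis by (simp add: regI)
  qed
  have tan: "(\<Sum>i\<in>UNIV. push X \<phi> v i y * pd f i y) = 0" if f: "f \<in> van_ideal X" and y: "y \<in> X" for f y
  proof -
    define x where "x = \<psi> y"
    have x: "x \<in> X" "\<phi> x = y" using inv y by (auto simp: x_def)
    have fp: "f \<in> poly_fun" using f by (rule van_ideal_poly)
    have "(\<Sum>i\<in>UNIV. push X \<phi> v i y * pd f i y) = (\<Sum>i\<in>UNIV. (\<Sum>j\<in>UNIV. Dm \<phi> i j x * v j x) * pd f i (\<phi> x))"
      using push_at[OF phi x(1)] x by simp
    also have "\<dots> = (\<Sum>j\<in>UNIV. v j x * (\<Sum>i\<in>UNIV. pd f i (\<phi> x) * Dm \<phi> i j x))"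
      by (simp add: sum_distrib_right sum_distrib_left mult_ac) (rule sum.swap)
    also have "\<dots> = (\<Sum>j\<in>UNIV. v j x * pd (\<lambda>x. f (\<phi> x)) j x)"
      by (simp add: pd_comp[OF fp aut_poly[OF phi]] Dm_def)
    also have "\<dots> = 0" by (rule VF_tan[OF v comp_van[OF phi f] x(1)])
    finally show ?thesis .
  qed
  show ?thesis using regs tan by (simp add: VF_def)
qed

lemma push_zero: "push X \<phi> (\<lambda>i x. 0) = (\<lambda>i x. 0)"
  by (simp add: push_def fun_eq_iff)

lemma push_add: "push X \<phi> (\<lambda>i x. v i x + w i x) = (\<lambda>i x. push X \<phi> v i x + push X \<phi> w i x)"
  by (simp add: push_def distrib_left sum.distrib fun_eq_iff)

lemma push_smult: "push X \<phi> (\<lambda>i x. c * v i x) = (\<lambda>i x. c * push X \<phi> v i x)"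
  by (simp add: push_def sum_distrib_left mult_ac fun_eq_iff)

lemma push_complete:
  assumes phi: "\<phi> \<in> Aut X" and v: "complete_vf X v"
  shows "complete_vf X (push X \<phi> v)"
proof -
  define \<psi> where "\<psi> = inv_aut X \<phi>"
  note inv = inv_aut[OF phi, folded \<psi>_def]
  have vV: "v \<in> VF X" using v by (simp add: complete_vf_def)
  have "\<exists>\<delta>::complex \<Rightarrow> 'a pt. \<delta> 0 = y \<and> (\<forall>t. \<delta> t \<in> X) \<and>
        (\<forall>t i. ((\<lambda>s. \<delta> s i) has_field_derivative push X \<phi> v i (\<delta> t)) (at t))" if y: "y \<in> X" for y
  proof -
    obtain \<gamma> :: "complex \<Rightarrow> 'a pt" where g: "\<gamma> 0 = \<psi> y" "\<And>t. \<gamma> t \<in> X"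
      "\<And>t i. ((\<lambda>s. \<gamma> s i) has_field_derivative v i (\<gamma> t)) (at t)"
      using v inv(2)[OF y] unfolding complete_vf_def by blast
    show ?thesis
    proof (intro exI[of _ "\<lambda>t. \<phi> (\<gamma> t)"] conjI allI)
      show "\<phi> (\<gamma> 0) = y" using g(1) inv(4)[OF y] by simp
      show "\<phi> (\<gamma> t) \<in> X" for t using aut_X[OF phi g(2)] .
      show "((\<lambda>s. \<phi> (\<gamma> s) i) has_field_derivative push X \<phi> v i (\<phi> (\<gamma> t))) (at t)" for t i
        using poly_curve[OF aut_poly[OF phi], of \<gamma> "\<lambda>j. v j (\<gamma> t)" t i] g(3)
        by (simp add: push_at[OF phi g(2)] Dm_def)
    qed
  qed
  then show ?thesis using push_VF[OF phi vV] by (simp add: complete_vf_def)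
qed

lemma push_apply_key:
  assumes phi: "\<phi> \<in> Aut X" and v: "v \<in> VF X" and w: "w \<in> VF X"
    and W: "\<And>j. W j \<in> poly_fun" "\<And>j x. x \<in> X \<Longrightarrow> w j x = W j x" and x: "x \<in> X"
  shows "vf_apply X (push X \<phi> v) (push X \<phi> w i) (\<phi> x) =
    (\<Sum>k\<in>UNIV. v k x * (\<Sum>j\<in>UNIV. pd (Dm \<phi> i j) k x * W j x + Dm \<phi> i j x * pd (W j) k x))"
proof -
  define \<psi> where "\<psi> = inv_aut X \<phi>"
  note inv = inv_aut[OF phi, folded \<psi>_def]
  define Q where "Q = (\<lambda>z. \<Sum>j\<in>UNIV. Dm \<phi> i j (\<psi> z) * W j (\<psi> z))"
  define R where "R = (\<lambda>z. \<Sum>j\<in>UNIV. Dm \<phi> i j z * W j z)"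
  have Qp: "Q \<in> poly_fun" unfolding Q_def
    by (intro poly_fun_sum poly_fun.mult poly_comp[OF Dm_poly[OF phi]] poly_comp[OF W(1)] inv(1)) auto
  have Rp: "R \<in> poly_fun" unfolding R_def
    by (intro poly_fun_sum poly_fun.mult Dm_poly[OF phi] W(1)) auto
  have Qe: "push X \<phi> w i z = Q z" if "z \<in> X" for z
    using that by (simp add: push_def Q_def \<psi>_def[symmetric] W(2) inv(2))
  have px: "\<phi> x \<in> X" using aut_X[OF phi x] .
  have "vf_apply X (push X \<phi> v) (push X \<phi> w i) (\<phi> x) =
      (\<Sum>l\<in>UNIV. push X \<phi> v l (\<phi> x) * pd Q l (\<phi> x))"
    using vf_apply_eq[OF push_VF[OF phi v] Qp, of "push X \<phi> w i" "\<phi> x"] Qe px by simp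
  also have "\<dots> = (\<Sum>l\<in>UNIV. (\<Sum>k\<in>UNIV. Dm \<phi> l k x * v k x) * pd Q l (\<phi> x))"
    by (simp add: push_at[OF phi x])
  also have "\<dots> = (\<Sum>k\<in>UNIV. v k x * (\<Sum>l\<in>UNIV. pd Q l (\<phi> x) * Dm \<phi> l k x))"
    by (simp add: sum_distrib_right sum_distrib_left mult_ac) (rule sum.swap)
  also have "\<dots> = (\<Sum>k\<in>UNIV. v k x * pd (\<lambda>z. Q (\<phi> z)) k x)"
    by (simp add: pd_comp[OF Qp aut_poly[OF phi]] Dm_def)
  also have "\<dots> = (\<Sum>k\<in>UNIV. v k x * pd R k x)"
  proof (rule rep_indep[OF v _ Rp _ x])
    show "(\<lambda>z. Q (\<phi> z)) \<in> poly_fun" by (rule poly_comp[OF Qp aut_poly[OF phi]])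
    show "Q (\<phi> z) = R z" if "z \<in> X" for z
      using that by (simp add: Q_def R_def inv(3))
  qed
  also have "\<dots> = (\<Sum>k\<in>UNIV. v k x * (\<Sum>j\<in>UNIV. pd (Dm \<phi> i j) k x * W j x + Dm \<phi> i j x * pd (W j) k x))"
    unfolding R_def by (subst pd_sum) (auto simp: pd_mult Dm_poly[OF phi] W(1) intro: poly_fun.mult Dm_poly[OF phi] W(1))
  finally show ?thesis .
qed

lemma Dm_sym: "\<phi> \<in> Aut X \<Longrightarrow> pd (Dm \<phi> i j) k = pd (Dm \<phi> i k) j"
  unfolding Dm_def by (rule pd_pd_sym[OF aut_poly])

lemma push_bracket:
  assumes phi: "\<phi> \<in> Aut X" and v: "v \<in> VF X" and w: "w \<in> VF X"
  shows "push X \<phi> (vf_bracket X v w) = vf_bracket X (push X \<phi> v) (push X \<phi> w)"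
proof (intro ext)
  fix i y
  define \<psi> where "\<psi> = inv_aut X \<phi>"
  note inv = inv_aut[OF phi, folded \<psi>_def]
  obtain V where V: "\<And>i. V i \<in> poly_fun" "\<And>i x. x \<in> X \<Longrightarrow> v i x = V i x" using VF_rep[OF v] by metis
  obtain W where W: "\<And>i. W i \<in> poly_fun" "\<And>i x. x \<in> X \<Longrightarrow> w i x = W i x" using VF_rep[OF w] by metis
  show "push X \<phi> (vf_bracket X v w) i y = vf_bracket X (push X \<phi> v) (push X \<phi> w) i y"
  proof (cases "y \<in> X")
    case False
    then show ?thesis by (simp add: push_def vf_bracket_def vf_apply_def Let_def)
  next
    case True
    define x where "x = \<psi> y"
    have x: "x \<in> X" "y = \<phi> x" using inv True by (auto simp: x_def)
    have ap: "vf_apply X v (w j) x = (\<Sum>k\<in>UNIV. v k x * pd (W j) k x)"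
      "vf_apply X w (v j) x = (\<Sum>k\<in>UNIV. w k x * pd (V j) k x)" for j
      using vf_apply_eq[OF v W(1), of "w j"] vf_apply_eq[OF w V(1), of "v j"] W(2) V(2) x by auto
    have sym: "(\<Sum>k\<in>UNIV. \<Sum>j\<in>UNIV. v k x * (pd (Dm \<phi> i j) k x * W j x)) =
               (\<Sum>k\<in>UNIV. \<Sum>j\<in>UNIV. w k x * (pd (Dm \<phi> i j) k x * V j x))"
    proof -
      have "(\<Sum>k\<in>UNIV. \<Sum>j\<in>UNIV. v k x * (pd (Dm \<phi> i j) k x * W j x)) =
            (\<Sum>j\<in>UNIV. \<Sum>k\<in>UNIV. v k x * (pd (Dm \<phi> i j) k x * W j x))"
        by (rule sum.swap)
      also have "\<dots> = (\<Sum>j\<in>UNIV. \<Sum>k\<in>UNIV. w j x * (pd (Dm \<phi> i k) j x * V k x))"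
        using V(2)[OF x(1)] W(2)[OF x(1)] Dm_sym[OF phi]
        by (intro sum.cong refl) (simp add: mult_ac)
      finally show ?thesis .
    qed
    have "vf_bracket X (push X \<phi> v) (push X \<phi> w) i y =
       (\<Sum>k\<in>UNIV. v k x * (\<Sum>j\<in>UNIV. pd (Dm \<phi> i j) k x * W j x + Dm \<phi> i j x * pd (W j) k x)) -
       (\<Sum>k\<in>UNIV. w k x * (\<Sum>j\<in>UNIV. pd (Dm \<phi> i j) k x * V j x + Dm \<phi> i j x * pd (V j) k x))"
      unfolding vf_bracket_def x(2)
      by (simp add: push_apply_key[OF phi v w W x(1)] push_apply_key[OF phi w v V x(1)])
    also have "\<dots> = (\<Sum>k\<in>UNIV. \<Sum>j\<in>UNIV. v k x * (Dm \<phi> i j x * pd (W j) k x)) -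
       (\<Sum>k\<in>UNIV. \<Sum>j\<in>UNIV. w k x * (Dm \<phi> i j x * pd (V j) k x))"
      using sym by (simp add: distrib_left sum.distrib sum_distrib_left)
    also have "\<dots> = (\<Sum>j\<in>UNIV. \<Sum>k\<in>UNIV. Dm \<phi> i j x * (v k x * pd (W j) k x)) -
       (\<Sum>j\<in>UNIV. \<Sum>k\<in>UNIV. Dm \<phi> i j x * (w k x * pd (V j) k x))"
      by (subst (1 2) sum.swap) (simp add: mult_ac)
    also have "\<dots> = push X \<phi> (vf_bracket X v w) i y"
      unfolding x(2) push_at[OF phi x(1)]
      by (simp add: vf_bracket_def ap right_diff_distrib sum_subtractf sum_distrib_left)
    finally show ?thesis by simp
  qed
qed

lemma push_Lie:
  assumes "v \<in> Lie_alg X" "\<phi> \<in> Aut X"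
  shows "push X \<phi> v \<in> Lie_alg X"
  using assms(1)
proof (induction rule: Lie_alg.induct)
  case (gen v) then show ?case by (intro Lie_alg.gen push_complete assms(2))
next
  case zero then show ?case by (simp add: push_zero Lie_alg.zero)
next
  case (add v w) then show ?case by (simp add: push_add Lie_alg.add)
next
  case (smult v c) then show ?case by (simp add: push_smult Lie_alg.smult)
next
  case (bracket v w) then show ?case
    by (simp add: push_bracket[OF assms(2) Lie_VF Lie_VF] Lie_alg.bracket)
qed



section \<open>The module generated by pushforwards\<close>

inductive_set Mset :: "('n::finite) pt set \<Rightarrow> 'n vfield set \<Rightarrow> 'n vfield set" for X L where
  zero: "(\<lambda>i x. 0) \<in> Mset X L"
| gen: "\<phi> \<in> Aut X \<Longrightarrow> l \<in> L \<Longrightarrow> push X \<phi> l \<in> Mset X L"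
| add: "v \<in> Mset X L \<Longrightarrow> w \<in> Mset X L \<Longrightarrow> (\<lambda>i x. v i x + w i x) \<in> Mset X L"

lemma Mset_Lie: assumes "submodule_VF X L" "L \<subseteq> Lie_alg X" "v \<in> Mset X L" shows "v \<in> Lie_alg X"
  using assms(3) by (induction rule: Mset.induct) (use assms in \<open>auto intro: Lie_alg.zero Lie_alg.add push_Lie\<close>)

lemma Mset_VF: assumes "submodule_VF X L" "v \<in> Mset X L" shows "v \<in> VF X"
  using assms(2) by (induction rule: Mset.induct) (use assms in \<open>auto simp: submodule_VF_def intro: VF_zero VF_add push_VF\<close>)

lemma Mset_sum: "finite S \<Longrightarrow> (\<And>s. s \<in> S \<Longrightarrow> f s \<in> Mset X L) \<Longrightarrow> (\<lambda>i x. \<Sum>s\<in>S. f s i x) \<in> Mset X L"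
proof (induction S rule: finite_induct)
  case empty then show ?case by (simp add: Mset.zero)
next
  case (insert a S) then show ?case using Mset.add[of "f a" X L "\<lambda>i x. \<Sum>s\<in>S. f s i x"] by simp
qed

lemma reg_comp_aut:
  assumes phi: "\<phi> \<in> Aut X" and h: "h \<in> reg X"
  shows "(\<lambda>x. if x \<in> X then h (\<phi> x) else 0) \<in> reg X"
proof -
  obtain p where p: "p \<in> poly_fun" "h = (\<lambda>x. if x \<in> X then p x else 0)" using h by (rule regE)
  have "(\<lambda>x. if x \<in> X then h (\<phi> x) else 0) = (\<lambda>x. if x \<in> X then p (\<phi> x) else 0)"
    using aut_X[OF phi] by (auto simp: p(2))
  then show ?thesis using regI[OF poly_comp[OF p(1) aut_poly[OF phi]]] by simp
qed

lemma Mset_rmult: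
  assumes L: "submodule_VF X L" and h: "h \<in> reg X" and v: "v \<in> Mset X L"
  shows "(\<lambda>i x. h x * v i x) \<in> Mset X L"
  using v
proof (induction rule: Mset.induct)
  case zero then show ?case by (simp add: Mset.zero)
next
  case (gen \<phi> l)
  define h' where "h' = (\<lambda>x. if x \<in> X then h (\<phi> x) else 0)"
  have h': "h' \<in> reg X" unfolding h'_def by (rule reg_comp_aut[OF gen(1) h])
  have l': "(\<lambda>i x. h' x * l i x) \<in> L" using L h' gen(2) by (simp add: submodule_VF_def)
  have "(\<lambda>i x. h x * push X \<phi> l i x) = push X \<phi> (\<lambda>i x. h' x * l i x)"
    using inv_aut[OF gen(1)] reg_out[OF h]
    by (intro ext) (auto simp: push_def h'_def sum_distrib_left mult_ac)
  then show ?case using Mset.gen[OF gen(1) l'] by simp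
next
  case (add v w) then show ?case using Mset.add[OF add.IH] by (simp add: distrib_left)
qed

section \<open>Differentials\<close>

lemma differential_sum:
  "differential \<phi> x (\<lambda>j. \<Sum>s\<in>S. c s * u s j) = (\<lambda>i. \<Sum>s\<in>S. c s * differential \<phi> x (u s) i)"
  unfolding differential_def
  by (rule ext) (simp add: sum_distrib_left sum_distrib_right mult_ac sum.swap[of _ S])

lemma aut_comp:
  assumes "\<phi> \<in> Aut X" "\<theta> \<in> Aut X"
  shows "(\<lambda>x. \<theta> (\<phi> x)) \<in> Aut X"
proof -
  note i1 = inv_aut[OF assms(1)] and i2 = inv_aut[OF assms(2)]
  show ?thesis unfolding Aut_def
  proof (intro CollectI conjI allI exI[of _ "\<lambda>x. inv_aut X \<phi> (inv_aut X \<theta> x)"])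
    show "(\<lambda>x. \<theta> (\<phi> x) i) \<in> poly_fun" for i
      by (rule poly_comp[OF aut_poly[OF assms(2)] aut_poly[OF assms(1)]])
    show "(\<lambda>x. inv_aut X \<phi> (inv_aut X \<theta> x) i) \<in> poly_fun" for i
      by (rule poly_comp[OF i1(1) i2(1)])
  qed (use aut_X[OF assms(1)] aut_X[OF assms(2)] i1 i2 in auto)
qed

lemma differential_comp:
  assumes "\<phi> \<in> Aut X" "\<theta> \<in> Aut X"
  shows "differential (\<lambda>x. \<theta> (\<phi> x)) x u = differential \<theta> (\<phi> x) (differential \<phi> x u)"
proof (rule ext)
  fix i
  have "differential (\<lambda>x. \<theta> (\<phi> x)) x u i =
     (\<Sum>j\<in>UNIV. (\<Sum>k\<in>UNIV. pd (\<lambda>x. \<theta> x i) k (\<phi> x) * pd (\<lambda>x. \<phi> x k) j x) * u j)"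
    unfolding differential_def by (simp add: pd_comp[OF aut_poly[OF assms(2)] aut_poly[OF assms(1)]])
  also have "\<dots> = differential \<theta> (\<phi> x) (differential \<phi> x u) i"
    unfolding differential_def
    by (simp add: sum_distrib_left sum_distrib_right mult_ac) (rule sum.swap)
  finally show "differential (\<lambda>x. \<theta> (\<phi> x)) x u i = differential \<theta> (\<phi> x) (differential \<phi> x u) i" .
qed

lemma differential_tangent:
  assumes phi: "\<phi> \<in> Aut X" and x: "x \<in> X" and u: "u \<in> tangent_space X x"
  shows "differential \<phi> x u \<in> tangent_space X (\<phi> x)"
proof -
  have "(\<Sum>j\<in>UNIV. pd f j (\<phi> x) * differential \<phi> x u j) = 0" if f: "f \<in> van_ideal X" for f
  proof -
    have fp: "f \<in> poly_fun" using f by (rule van_ideal_poly)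
    have "(\<Sum>j\<in>UNIV. pd f j (\<phi> x) * differential \<phi> x u j) =
          (\<Sum>k\<in>UNIV. (\<Sum>j\<in>UNIV. pd f j (\<phi> x) * pd (\<lambda>x. \<phi> x j) k x) * u k)"
      unfolding differential_def
      by (simp add: sum_distrib_left sum_distrib_right mult_ac) (rule sum.swap)
    also have "\<dots> = (\<Sum>k\<in>UNIV. pd (\<lambda>x. f (\<phi> x)) k x * u k)"
      by (simp add: pd_comp[OF fp aut_poly[OF phi]])
    also have "\<dots> = 0" using u comp_van[OF phi f] by (simp add: tangent_space_def)
    finally show ?thesis .
  qed
  then show ?thesis by (simp add: tangent_space_def)
qed

lemma differential_inv:
  assumes phi: "\<phi> \<in> Aut X" and th: "\<theta> \<in> Aut X" and inv: "\<And>z. z \<in> X \<Longrightarrow> \<theta> (\<phi> z) = z"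
    and x: "x \<in> X" and u: "u \<in> tangent_space X x"
  shows "differential \<theta> (\<phi> x) (differential \<phi> x u) = u"
proof -
  have "differential \<theta> (\<phi> x) (differential \<phi> x u) = differential (\<lambda>z. \<theta> (\<phi> z)) x u"
    by (rule differential_comp[OF phi th, symmetric])
  also have "\<dots> = u"
  proof (rule ext)
    fix i
    have cp: "(\<lambda>z. \<theta> (\<phi> z) i) \<in> poly_fun" by (rule poly_comp[OF aut_poly[OF th] aut_poly[OF phi]])
    have van: "(\<lambda>z. \<theta> (\<phi> z) i - z i) \<in> van_ideal X"
      using inv by (intro van_idealI poly_fun_diff cp poly_fun.coord) auto
    have "(\<Sum>j\<in>UNIV. pd (\<lambda>z. \<theta> (\<phi> z) i - z i) j x * u j) = 0"
      using u van by (simp add: tangent_space_def mult.commute)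
    then have "(\<Sum>j\<in>UNIV. pd (\<lambda>z. \<theta> (\<phi> z) i) j x * u j) = (\<Sum>j\<in>UNIV. pd (\<lambda>z. z i) j x * u j)"
      by (simp add: pd_diff[OF cp poly_fun.coord] left_diff_distrib sum_subtractf)
    also have "\<dots> = (\<Sum>j\<in>UNIV. if j = i then u j else 0)"
      by (intro sum.cong) (auto simp: pd_coord)
    also have "\<dots> = u i" by simp
    finally show "differential (\<lambda>z. \<theta> (\<phi> z)) x u i = u i"
      by (simp add: differential_def)
  qed
  finally show ?thesis .
qed

lemma push_at_diff:
  assumes "\<phi> \<in> Aut X" "x \<in> X"
  shows "(\<lambda>i. push X \<phi> v i (\<phi> x)) = differential \<phi> x (\<lambda>j. v j x)"
  using push_at[OF assms] by (simp add: differential_def Dm_def fun_eq_iff)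

lemma VF_tangent: "v \<in> VF X \<Longrightarrow> y \<in> X \<Longrightarrow> (\<lambda>j. v j y) \<in> tangent_space X y"
  by (auto simp: tangent_space_def mult.commute dest: VF_tan)

lemma fiber_full:
  assumes L: "submodule_VF X L" and tr: "transitive_Aut X" and x0: "x0 \<in> X"
    and F: "F \<subseteq> {(\<lambda>i. \<nu> i x0) | \<nu>. \<nu> \<in> L}" "generating_subset X x0 F"
    and y: "y \<in> X" and u: "u \<in> tangent_space X y"
  shows "\<exists>m\<in>Mset X L. (\<lambda>i. m i y) = u"
proof -
  obtain \<phi>1 where p1: "\<phi>1 \<in> Aut X" "\<phi>1 x0 = y" using tr x0 y by (auto simp: transitive_Aut_def)
  define \<psi>1 where "\<psi>1 = inv_aut X \<phi>1"
  have ps1: "\<psi>1 \<in> Aut X" "\<psi>1 y = x0" using inv_aut_Aut[OF p1(1)] inv_aut(3)[OF p1(1) x0] p1(2)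
    by (auto simp: \<psi>1_def)
  define u' where "u' = differential \<psi>1 y u"
  have u'T: "u' \<in> tangent_space X x0" using differential_tangent[OF ps1(1) y u] ps1(2) by (simp add: u'_def)
  have uu: "differential \<phi>1 x0 u' = u"
    unfolding u'_def ps1(2)[symmetric]
    by (rule differential_inv[OF ps1(1) p1(1) _ y u]) (use inv_aut(4)[OF p1(1)] in \<open>simp add: \<psi>1_def\<close>)
  have "u' \<in> cspan {differential \<phi> x0 v | \<phi> v. \<phi> \<in> Aut X \<and> \<phi> x0 = x0 \<and> v \<in> F}"
    using F(2) u'T by (simp add: generating_subset_def)
  then obtain S c where S: "finite S" "S \<subseteq> {differential \<phi> x0 v | \<phi> v. \<phi> \<in> Aut X \<and> \<phi> x0 = x0 \<and> v \<in> F}"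
    and u'e: "u' = (\<lambda>j. \<Sum>s\<in>S. c s * s j)"
    unfolding cspan_def by blast
  have "\<forall>s\<in>S. \<exists>\<phi> \<nu>. \<phi> \<in> Aut X \<and> \<phi> x0 = x0 \<and> \<nu> \<in> L \<and> s = differential \<phi> x0 (\<lambda>i. \<nu> i x0)"
    using S(2) F(1) by blast
  then obtain fp fn where fpn: "\<And>s. s \<in> S \<Longrightarrow> fp s \<in> Aut X \<and> fp s x0 = x0 \<and> fn s \<in> L \<and>
      s = differential (fp s) x0 (\<lambda>i. fn s i x0)"
    by metis
  define g where "g s = (\<lambda>x. \<phi>1 (fp s x))" for s
  have gA: "g s \<in> Aut X" "g s x0 = y" if "s \<in> S" for s
    using fpn[OF that] aut_comp[OF _ p1(1), of "fp s"] p1(2) by (auto simp: g_def)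
  have ds: "differential \<phi>1 x0 s = (\<lambda>i. push X (g s) (fn s) i y)" if "s \<in> S" for s
  proof -
    have "differential \<phi>1 x0 s = differential \<phi>1 (fp s x0) (differential (fp s) x0 (\<lambda>i. fn s i x0))"
      using fpn[OF that] by simp
    also have "\<dots> = differential (g s) x0 (\<lambda>i. fn s i x0)"
      unfolding g_def by (rule differential_comp[symmetric]) (use fpn[OF that] p1 in auto)
    also have "\<dots> = (\<lambda>i. push X (g s) (fn s) i (g s x0))"
      by (rule push_at_diff[symmetric]) (use gA[OF that] x0 in auto)
    finally show ?thesis using gA[OF that] by simp
  qed
  define m where "m = (\<lambda>i x. \<Sum>s\<in>S. (if x \<in> X then c s else 0) * push X (g s) (fn s) i x)"
  have "m \<in> Mset X L" unfolding m_def
    by (intro Mset_sum S(1) Mset_rmult[OF L] reg_const Mset.gen gA) (use fpn in auto)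
  moreover have "(\<lambda>i. m i y) = u"
  proof -
    have "u = differential \<phi>1 x0 u'" using uu by simp
    also have "\<dots> = (\<lambda>i. \<Sum>s\<in>S. c s * differential \<phi>1 x0 s i)"
      unfolding u'e by (rule differential_sum)
    also have "\<dots> = (\<lambda>i. m i y)"
      unfolding m_def using y by (auto intro!: sum.cong simp: ds)
    finally show ?thesis by simp
  qed
  ultimately show ?thesis by blast
qed



section \<open>Linear algebra on tangent spaces\<close>

definition vc :: "('n::finite) pt \<Rightarrow> complex^'n" where "vc u = (\<chi> i. u i)"
definition Tv :: "('n::finite) pt set \<Rightarrow> 'n pt \<Rightarrow> (complex^'n) set" where
  "Tv X y = vc ` tangent_space X y"
definition jac :: "(('n::finite) pt \<Rightarrow> 'n pt) \<Rightarrow> 'n pt \<Rightarrow> complex^'n^'n" where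
  "jac \<phi> x = (\<chi> i j. pd (\<lambda>z. \<phi> z i) j x)"

lemma vc_nth[simp]: "vc u $ i = u i"
  by (simp add: vc_def)

lemma vc_inj: "vc u = vc w \<longleftrightarrow> u = w"
  by (auto simp: vec_eq_iff fun_eq_iff)

lemma vc_diff: "vc (differential \<phi> x u) = jac \<phi> x *v vc u"
  by (simp add: vec_eq_iff differential_def jac_def matrix_vector_mult_def)

lemma Tv_subspace: "vec.subspace (Tv X y)"
proof (rule vec.subspaceI)
  show "0 \<in> Tv X y"
    unfolding Tv_def by (rule image_eqI[of _ _ "\<lambda>i. 0"]) (auto simp: vec_eq_iff tangent_space_def)
  show "a + b \<in> Tv X y" if "a \<in> Tv X y" "b \<in> Tv X y" for a b
  proof -
    from that(1) obtain u where "u \<in> tangent_space X y" "a = vc u" unfolding Tv_def by blast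
    moreover from that(2) obtain w where "w \<in> tangent_space X y" "b = vc w" unfolding Tv_def by blast
    ultimately
    show ?thesis unfolding Tv_def
      by (intro image_eqI[of _ _ "\<lambda>i. u i + w i"])
         (auto simp: vec_eq_iff tangent_space_def distrib_left sum.distrib)
  qed
  show "c *s a \<in> Tv X y" if "a \<in> Tv X y" for c a
  proof -
    from that obtain u where "u \<in> tangent_space X y" "a = vc u" unfolding Tv_def by blast
    then show ?thesis unfolding Tv_def
      by (intro image_eqI[of _ _ "\<lambda>i. c * u i"])
         (auto simp: vec_eq_iff tangent_space_def sum_distrib_left[symmetric] mult_ac)
  qed
qed

lemma Tv_dim_le:
  assumes phi: "\<phi> \<in> Aut X" and x: "x \<in> X"
  shows "vec.dim (Tv X (\<phi> x)) \<le> vec.dim (Tv X x)"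
proof -
  define \<psi> where "\<psi> = inv_aut X \<phi>"
  note inv = inv_aut[OF phi, folded \<psi>_def]
  have ps: "\<psi> \<in> Aut X" unfolding \<psi>_def by (rule inv_aut_Aut[OF phi])
  have "Tv X (\<phi> x) \<subseteq> (*v) (jac \<phi> x) ` Tv X x"
  proof
    fix a assume "a \<in> Tv X (\<phi> x)"
    then obtain u where u: "u \<in> tangent_space X (\<phi> x)" "a = vc u" by (auto simp: Tv_def)
    have px: "\<phi> x \<in> X" by (rule aut_X[OF phi x])
    have ii: "\<And>z. z \<in> X \<Longrightarrow> \<phi> (\<psi> z) = z" using inv(4) by blast
    have "differential \<phi> (\<psi> (\<phi> x)) (differential \<psi> (\<phi> x) u) = u"
      by (rule differential_inv[OF ps phi ii px u(1)])
    then have e: "differential \<phi> x (differential \<psi> (\<phi> x) u) = u" using inv(3)[OF x] by simp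
    have "differential \<psi> (\<phi> x) u \<in> tangent_space X x"
      using differential_tangent[OF ps px u(1)] inv(3)[OF x] by simp
    then show "a \<in> (*v) (jac \<phi> x) ` Tv X x"
      unfolding Tv_def using e u(2) vc_diff[of \<phi> x] by (metis image_eqI)
  qed
  then have "vec.dim (Tv X (\<phi> x)) \<le> vec.dim ((*v) (jac \<phi> x) ` Tv X x)"
    by (rule vec.dim_subset)
  also have "\<dots> \<le> vec.dim (Tv X x)"
    by (rule vec.dim_image_le[OF matrix_vector_mul_linear_gen])
  finally show ?thesis .
qed

lemma Tv_dim:
  assumes tr: "transitive_Aut X" and x: "x \<in> X" and y: "y \<in> X"
  shows "vec.dim (Tv X y) = vec.dim (Tv X x)"
proof -
  obtain \<phi> where phi: "\<phi> \<in> Aut X" "\<phi> x = y" using tr x y by (auto simp: transitive_Aut_def)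
  obtain \<theta> where th: "\<theta> \<in> Aut X" "\<theta> y = x" using tr x y by (auto simp: transitive_Aut_def)
  show ?thesis using Tv_dim_le[OF phi(1) x] Tv_dim_le[OF th(1) y] phi(2) th(2) by simp
qed

lemma det_ker:
  fixes A :: "complex^'n^'n"
  shows "det A \<noteq> 0 \<longleftrightarrow> (\<forall>x. A *v x = 0 \<longrightarrow> x = 0)"
  by (simp add: invertible_det_nz[symmetric] invertible_left_inverse matrix_left_invertible_ker)

lemma poly_det:
  fixes A :: "'m::finite pt \<Rightarrow> complex^'n^'n"
  assumes "\<And>i j. (\<lambda>y. A y $ i $ j) \<in> poly_fun"
  shows "(\<lambda>y. det (A y)) \<in> poly_fun"
  unfolding det_def
  by (intro poly_fun_sum poly_fun_smult poly_fun_prod assms) (auto simp: finite_permutations)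

lemma sum_split_K:
  fixes f :: "'n::finite \<Rightarrow> 'a::comm_monoid_add"
  shows "(\<Sum>k\<in>UNIV. f k) = (\<Sum>k\<in>K. f k) + (\<Sum>k\<in>-K. f k)"
proof -
  have "(\<Sum>k\<in>K \<union> -K. f k) = (\<Sum>k\<in>K. f k) + (\<Sum>k\<in>-K. f k)"
    by (rule sum.union_disjoint) auto
  moreover have "K \<union> -K = UNIV" by auto
  ultimately show ?thesis by simp
qed

lemma local_gen:
  fixes X :: "('n::finite) pt set"
  assumes L: "submodule_VF X L" and tr: "transitive_Aut X" and x0: "x0 \<in> X"
    and F: "F \<subseteq> {(\<lambda>i. \<nu> i x0) | \<nu>. \<nu> \<in> L}" "generating_subset X x0 F"
    and v: "v \<in> VF X" and y0: "y0 \<in> X"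
  shows "\<exists>d\<in>poly_fun. d y0 \<noteq> 0 \<and> (\<lambda>i x. (if x \<in> X then d x else 0) * v i x) \<in> Mset X L"
proof -
  have full: "\<And>y u. y \<in> X \<Longrightarrow> u \<in> tangent_space X y \<Longrightarrow> \<exists>m\<in>Mset X L. (\<lambda>i. m i y) = u"
    using fiber_full[OF L tr x0 F] by blast
  obtain B where B: "B \<subseteq> Tv X y0" "vec.independent B" "Tv X y0 \<subseteq> vec.span B" "card B = vec.dim (Tv X y0)"
    by (rule vec.basis_exists)
  obtain B' where B': "B \<subseteq> B'" "vec.independent B'" "UNIV \<subseteq> vec.span B'"
    using vec.maximal_independent_subset_extend[OF subset_UNIV B(2)] by metis
  have fB': "finite B'" by (rule vec.finiteI_independent[OF B'(2)])
  have cB': "card B' = CARD('n)"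
    using vec.basis_card_eq_dim[of B' UNIV] B' by (simp add: card_cart_basis)
  obtain e where e: "bij_betw e (UNIV::'n set) B'" using finite_same_card_bij[of "UNIV::'n set" B'] fB' cB' by auto
  define K where "K = {k. e k \<in> B}"
  have eK: "bij_betw e K B" using e B'(1) unfolding K_def bij_betw_def inj_on_def by auto
  have cK: "card K = vec.dim (Tv X y0)" using bij_betw_same_card[OF eK] B(4) by simp
  have "\<forall>k\<in>K. \<exists>m\<in>Mset X L. vc (\<lambda>i. m i y0) = e k"
  proof
    fix k assume "k \<in> K"
    then have "e k \<in> Tv X y0" using B(1) by (auto simp: K_def)
    then obtain u where "u \<in> tangent_space X y0" "e k = vc u" by (auto simp: Tv_def)
    then show "\<exists>m\<in>Mset X L. vc (\<lambda>i. m i y0) = e k" using full[OF y0] by metis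
  qed
  then obtain mk where mk: "\<And>k. k \<in> K \<Longrightarrow> mk k \<in> Mset X L" "\<And>k. k \<in> K \<Longrightarrow> vc (\<lambda>i. mk k i y0) = e k"
    by metis
  have mkV: "\<And>k. k \<in> K \<Longrightarrow> mk k \<in> VF X" using Mset_VF[OF L] mk(1) by blast
  have "\<forall>k. \<exists>P. k \<in> K \<longrightarrow> (\<forall>i. P i \<in> poly_fun \<and> (\<forall>x\<in>X. mk k i x = P i x))"
    using VF_rep[OF mkV] by metis
  then obtain Mp where Mp: "\<And>k i. k \<in> K \<Longrightarrow> Mp k i \<in> poly_fun"
    "\<And>k i x. k \<in> K \<Longrightarrow> x \<in> X \<Longrightarrow> mk k i x = Mp k i x" by metis
  obtain V where V: "\<And>i. V i \<in> poly_fun" "\<And>i x. x \<in> X \<Longrightarrow> v i x = V i x" using VF_rep[OF v] by metis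
  define col where "col k y = (if k \<in> K then vc (\<lambda>i. Mp k i y) else e k)" for k y
  define A where "A y = (\<chi> i j. col j y $ i)" for y
  define d where "d y = det (A y)" for y
  define hn where "hn k y = det (\<chi> i j. if j = k then V i y else A y $ i $ j)" for k y
  have Ap: "(\<lambda>y. A y $ i $ j) \<in> poly_fun" for i j
    by (cases "j \<in> K") (simp_all add: A_def col_def Mp poly_fun.const)
  have dp: "d \<in> poly_fun" unfolding d_def by (rule poly_det[OF Ap])
  have hp: "hn k \<in> poly_fun" for k unfolding hn_def
  proof (rule poly_det)
    fix i j show "(\<lambda>y. (\<chi> i j. if j = k then V i y else A y $ i $ j) $ i $ j) \<in> poly_fun"
      by (cases "j = k") (simp_all add: V Ap)
  qed
  have Acol: "(A y *v x) $ i = (\<Sum>k\<in>UNIV. x$k * col k y $ i)" for y x i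
    by (simp add: A_def matrix_vector_mult_def mult.commute)
  have col_y0: "col k y0 = e k" for k
    using mk(2)[of k] Mp(2)[OF _ y0, of k] by (auto simp: col_def)
  have d0: "d y0 \<noteq> 0"
    unfolding d_def det_ker
  proof (intro allI impI)
    fix x assume "A y0 *v x = 0"
    then have z: "(\<Sum>k\<in>UNIV. x$k * e k $ i) = 0" for i
      using Acol[of y0 x i] col_y0 by (simp add: vec_eq_iff)
    define u where "u b = x $ (inv_into UNIV e b)" for b
    have "(\<Sum>b\<in>B'. u b *s b) = (\<Sum>k\<in>UNIV. u (e k) *s e k)"
      by (rule sum.reindex_bij_betw[OF e, symmetric])
    also have "\<dots> = (\<Sum>k\<in>UNIV. x $ k *s e k)"
      using e by (simp add: u_def bij_betw_def)
    also have "\<dots> = 0" using z by (simp add: vec_eq_iff)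
    finally have "\<forall>b\<in>B'. u b = 0" using B'(2) vec.dependent_finite[OF fB'] by auto
    then show "x = 0"
      using e by (auto simp: vec_eq_iff u_def bij_betw_def)
  qed
  have key: "d y * v i y = (\<Sum>k\<in>K. hn k y * mk k i y)" if y: "y \<in> X" and dy: "d y \<noteq> 0" for y i
  proof -
    have inj0: "\<And>x. A y *v x = 0 \<Longrightarrow> x = 0" using dy det_ker unfolding d_def by blast
    have colm: "col k y = vc (\<lambda>i. mk k i y)" if "k \<in> K" for k
      using Mp(2)[OF that y] that by (simp add: col_def)
    have colT: "col k y \<in> Tv X y" if "k \<in> K" for k
      using VF_tangent[OF mkV[OF that] y] colm[OF that] by (simp add: Tv_def)
    have bT: "vc (\<lambda>i. v i y) \<in> Tv X y" using VF_tangent[OF v y] by (simp add: Tv_def)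
    define xs where "xs = (\<chi> k. hn k y / d y)"
    have Axs: "A y *v xs = vc (\<lambda>i. v i y)"
    proof -
      have "xs = (\<chi> k. det (\<chi> i j. if j = k then vc (\<lambda>i. v i y) $ i else A y $ i $ j) / det (A y))"
      proof -
        have vv: "\<And>i. vc (\<lambda>i. v i y) $ i = V i y" using V(2)[OF y] by simp
        show ?thesis by (simp only: vv) (simp add: xs_def hn_def d_def)
      qed
      then show ?thesis using cramer[of "A y" xs "vc (\<lambda>i. v i y)"] dy by (simp add: d_def)
    qed
    have delta: "(\<Sum>k\<in>UNIV. (if k = a then 1 else 0) * f k) = (f a :: complex)" for a :: 'n and f
    proof -
      have "(\<Sum>k\<in>UNIV. (if k = a then 1 else 0) * f k) = (\<Sum>k\<in>UNIV. if k = a then f k else 0)"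
        by (intro sum.cong) auto
      then show ?thesis by simp
    qed
    have colinj: "inj_on (\<lambda>k. col k y) K"
    proof (rule inj_onI, rule ccontr)
      fix k1 k2 assume k: "k1 \<in> K" "k2 \<in> K" "col k1 y = col k2 y" "k1 \<noteq> k2"
      define x where "x = (\<chi> k. (if k = k1 then 1 else 0) - (if k = k2 then 1 else (0::complex)))"
      have "A y *v x = 0"
      proof (unfold vec_eq_iff, intro allI)
        fix i
        have "(A y *v x) $ i = (\<Sum>k\<in>UNIV. (if k = k1 then 1 else 0) * col k y $ i) -
               (\<Sum>k\<in>UNIV. (if k = k2 then 1 else 0) * col k y $ i)"
          by (simp add: Acol x_def left_diff_distrib sum_subtractf)
        also have "\<dots> = 0" unfolding delta using k(3) by simp
        finally show "(A y *v x) $ i = 0 $ i" by simp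
      qed
      then have "x = 0" by (rule inj0)
      moreover have "x $ k1 = 1" using k(4) by (simp add: x_def)
      ultimately show False by simp
    qed
    have sumK: "(\<Sum>k\<in>UNIV. (if k \<in> K then f k else 0)) = (\<Sum>k\<in>K. f k)" for f :: "'n \<Rightarrow> complex"
      by (simp add: sum.If_cases)
    have indep: "vec.independent ((\<lambda>k. col k y) ` K)"
    proof
      assume dep: "vec.dependent ((\<lambda>k. col k y) ` K)"
      have fin: "finite ((\<lambda>k. col k y) ` K)" by simp
      obtain u where u: "\<exists>c\<in>(\<lambda>k. col k y) ` K. u c \<noteq> 0" "(\<Sum>c\<in>(\<lambda>k. col k y) ` K. u c *s c) = 0"
        using dep vec.dependent_finite[OF fin] by blast
      define x where "x = (\<chi> k. if k \<in> K then u (col k y) else 0)"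
      have "A y *v x = (\<Sum>c\<in>(\<lambda>k. col k y) ` K. u c *s c)"
      proof (unfold vec_eq_iff, intro allI)
        fix i
        have "(A y *v x) $ i = (\<Sum>k\<in>UNIV. (if k \<in> K then u (col k y) * col k y $ i else 0))"
          unfolding Acol by (intro sum.cong) (auto simp: x_def)
        also have "\<dots> = (\<Sum>k\<in>K. u (col k y) * col k y $ i)" by (rule sumK)
        also have "\<dots> = (\<Sum>c\<in>(\<lambda>k. col k y) ` K. u c *s c) $ i"
          by (simp add: sum.reindex[OF colinj])
        finally show "(A y *v x) $ i = (\<Sum>c\<in>(\<lambda>k. col k y) ` K. u c *s c) $ i" .
      qed
      then have "x = 0" using u(2) inj0 by simp
      then have "u (col k y) = 0" if "k \<in> K" for k using that
        by (simp add: vec_eq_iff x_def) (metis (mono_tags))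
      then show False using u(1) by auto
    qed
    have cardK: "card ((\<lambda>k. col k y) ` K) = vec.dim (Tv X y)"
      using card_image[OF colinj] cK Tv_dim[OF tr y0 y] by simp
    have spanT: "Tv X y \<subseteq> vec.span ((\<lambda>k. col k y) ` K)"
      using vec.card_eq_dim[of "(\<lambda>k. col k y) ` K" "Tv X y"] colT indep cardK by auto
    define rest where "rest = (\<Sum>k\<in>-K. xs$k *s col k y)"
    have restsum: "vc (\<lambda>i. v i y) = (\<Sum>k\<in>K. xs$k *s col k y) + rest"
      unfolding Axs[symmetric] rest_def
      by (simp add: vec_eq_iff Acol sum_split_K[of _ K])
    have restT: "rest \<in> Tv X y"
    proof -
      have "(\<Sum>k\<in>K. xs$k *s col k y) \<in> Tv X y"
        by (rule vec.subspace_sum[OF Tv_subspace]) (auto intro: vec.subspace_scale[OF Tv_subspace] colT)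
      then have "vc (\<lambda>i. v i y) - (\<Sum>k\<in>K. xs$k *s col k y) \<in> Tv X y"
        by (rule vec.subspace_diff[OF Tv_subspace bT])
      then show ?thesis using restsum by simp
    qed
    obtain a where a: "rest = (\<Sum>c\<in>(\<lambda>k. col k y) ` K. a c *s c)"
      using spanT restT vec.span_finite[of "(\<lambda>k. col k y) ` K"] by auto
    define x2 where "x2 = (\<chi> k. if k \<in> K then - a (col k y) else xs$k)"
    have "A y *v x2 = 0"
    proof (unfold vec_eq_iff, intro allI)
      fix i
      have r1: "rest $ i = (\<Sum>k\<in>K. a (col k y) * col k y $ i)"
        unfolding a by (simp add: sum.reindex[OF colinj])
      have r2: "rest $ i = (\<Sum>k\<in>-K. xs$k * col k y $ i)"
        unfolding rest_def by simp
      have "(A y *v x2) $ i = (\<Sum>k\<in>K. - a (col k y) * col k y $ i) + (\<Sum>k\<in>-K. xs$k * col k y $ i)"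
        unfolding Acol sum_split_K[of _ K] by (simp add: x2_def)
      also have "\<dots> = 0" using r1 r2 by (simp add: sum_negf)
      finally show "(A y *v x2) $ i = 0 $ i" by simp
    qed
    then have "x2 = 0" by (rule inj0)
    then have xs0: "xs $ k = 0" if "k \<notin> K" for k using that
      by (simp add: vec_eq_iff x2_def) (metis (mono_tags))
    have "v i y = (A y *v xs) $ i" using Axs by simp
    also have "\<dots> = (\<Sum>k\<in>K. xs$k * col k y $ i)"
      unfolding Acol sum_split_K[of _ K] using xs0 by simp
    also have "\<dots> = (\<Sum>k\<in>K. hn k y / d y * mk k i y)"
      by (intro sum.cong refl) (simp add: colm xs_def)
    finally show ?thesis using dy by (simp add: sum_distrib_left field_simps sum_divide_distrib)
  qed
  define m where "m = (\<lambda>i x. \<Sum>k\<in>K. (if x \<in> X then d x * hn k x else 0) * mk k i x)"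
  have mM: "m \<in> Mset X L" unfolding m_def
    by (intro Mset_sum Mset_rmult[OF L] mk(1) regI poly_fun.mult dp hp) auto
  have "(\<lambda>i x. (if x \<in> X then d x * d x else 0) * v i x) = m"
  proof (intro ext)
    fix i x
    show "(if x \<in> X then d x * d x else 0) * v i x = m i x"
    proof (cases "x \<in> X \<and> d x \<noteq> 0")
      case True
      then show ?thesis using key[of x i] by (simp add: m_def sum_distrib_left mult_ac)
    next
      case False
      then show ?thesis by (auto simp: m_def)
    qed
  qed
  then show ?thesis using mM d0 by (intro bexI[of _ "\<lambda>x. d x * d x"] conjI) (auto intro: poly_fun.mult dp)
qed



section \<open>Weak Nullstellensatz\<close>

definition pideal :: "('n::finite) fn set \<Rightarrow> bool" where
  "pideal J \<longleftrightarrow> J \<subseteq> poly_fun \<and> (\<lambda>x. 0) \<in> J \<and> (\<forall>p\<in>J. \<forall>q\<in>J. (\<lambda>x. p x + q x) \<in> J) \<and>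
     (\<forall>p\<in>poly_fun. \<forall>q\<in>J. (\<lambda>x. p x * q x) \<in> J)"

lemma pidealD:
  assumes "pideal J"
  shows "J \<subseteq> poly_fun" "(\<lambda>x. 0) \<in> J" "\<And>p q. p \<in> J \<Longrightarrow> q \<in> J \<Longrightarrow> (\<lambda>x. p x + q x) \<in> J"
    "\<And>p q. p \<in> poly_fun \<Longrightarrow> q \<in> J \<Longrightarrow> (\<lambda>x. p x * q x) \<in> J"
  using assms by (auto simp: pideal_def)

lemma pideal_smult: "pideal J \<Longrightarrow> q \<in> J \<Longrightarrow> (\<lambda>x. c * q x) \<in> J"
  using pidealD(4)[of J "\<lambda>x. c" q] by (simp add: poly_fun.const)

lemma pideal_diff: "pideal J \<Longrightarrow> p \<in> J \<Longrightarrow> q \<in> J \<Longrightarrow> (\<lambda>x. p x - q x) \<in> J"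
  using pidealD(3)[of J p "\<lambda>x. (-1) * q x"] pideal_smult[of J q "-1"] by simp

lemma pideal_sum: assumes J: "pideal J" shows "finite S \<Longrightarrow> (\<And>s. s \<in> S \<Longrightarrow> f s \<in> J) \<Longrightarrow> (\<lambda>x. \<Sum>s\<in>S. f s x) \<in> J"
proof (induction S rule: finite_induct)
  case empty then show ?case by (simp add: pidealD(2)[OF J])
next
  case (insert a S) then show ?case using pidealD(3)[OF J, of "f a" "\<lambda>x. \<Sum>s\<in>S. f s x"] by simp
qed

lemma pideal_eq: "q \<in> J \<Longrightarrow> (\<And>x. p x = q x) \<Longrightarrow> p \<in> J"
proof -
  assume "q \<in> J" "\<And>x. p x = q x"
  then have "p = q" by (rule_tac ext) simp
  then show ?thesis using \<open>q \<in> J\<close> by simp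
qed

lemma maximal_ideal_exists:
  fixes J :: "('n::finite) fn set"
  assumes J: "pideal J" "(\<lambda>x. 1) \<notin> J"
  shows "\<exists>M. pideal M \<and> J \<subseteq> M \<and> (\<lambda>x. 1) \<notin> M \<and>
     (\<forall>M'. pideal M' \<and> M \<subseteq> M' \<and> (\<lambda>x. 1) \<notin> M' \<longrightarrow> M' = M)"
proof -
  define A where "A = {M. pideal M \<and> J \<subseteq> M \<and> (\<lambda>x::'n pt. 1::complex) \<notin> M}"
  have "\<forall>C\<in>chains A. \<exists>U\<in>A. \<forall>X\<in>C. X \<subseteq> U"
  proof
    fix C assume C: "C \<in> chains A"
    show "\<exists>U\<in>A. \<forall>X\<in>C. X \<subseteq> U"
    proof (cases "C = {}")
      case True then show ?thesis using J by (auto simp: A_def)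
    next
      case False
      have CA: "C \<subseteq> A" and ch: "\<And>X Y. X \<in> C \<Longrightarrow> Y \<in> C \<Longrightarrow> X \<subseteq> Y \<or> Y \<subseteq> X"
        using C by (auto simp: chains_def chain_subset_def)
      have "pideal (\<Union>C)"
        unfolding pideal_def
      proof (intro conjI ballI)
        show "\<Union>C \<subseteq> poly_fun" using CA by (auto simp: A_def pideal_def)
        show "(\<lambda>x. 0) \<in> \<Union>C" using CA False by (auto simp: A_def pideal_def)
        show "(\<lambda>x. p x + q x) \<in> \<Union>C" if "p \<in> \<Union>C" "q \<in> \<Union>C" for p q
        proof -
          from that(1) obtain X where X: "X \<in> C" "p \<in> X" by blast
          from that(2) obtain Y where Y: "Y \<in> C" "q \<in> Y" by blast
          note XY = X(1) Y(1) X(2) Y(2)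
          show ?thesis
          proof (cases "X \<subseteq> Y")
            case True
            have "pideal Y" using CA XY by (auto simp: A_def)
            then have "(\<lambda>x. p x + q x) \<in> Y" using pidealD(3) XY True by blast
            then show ?thesis using XY by blast
          next
            case False then have "Y \<subseteq> X" using ch XY by blast
            have "pideal X" using CA XY by (auto simp: A_def)
            then have "(\<lambda>x. p x + q x) \<in> X" using pidealD(3) XY \<open>Y \<subseteq> X\<close> by blast
            then show ?thesis using XY by blast
          qed
        qed
        show "(\<lambda>x. p x * q x) \<in> \<Union>C" if "p \<in> poly_fun" "q \<in> \<Union>C" for p q
        proof -
          from that(2) obtain X where X: "X \<in> C" "q \<in> X" by blast
          have "pideal X" using CA X by (auto simp: A_def)
          then have "(\<lambda>x. p x * q x) \<in> X" using pidealD(4) X that(1) by blast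
          then show ?thesis using X by blast
        qed
      qed
      moreover have "J \<subseteq> \<Union>C" using False CA by (auto simp: A_def)
      moreover have "(\<lambda>x. 1) \<notin> \<Union>C" using CA by (auto simp: A_def)
      ultimately show ?thesis by (auto simp: A_def)
    qed
  qed
  from Zorn_Lemma2[OF this] obtain M where "M \<in> A" "\<forall>X\<in>A. M \<subseteq> X \<longrightarrow> X = M" by blast
  then show ?thesis unfolding A_def by (intro exI[of _ M]) blast
qed

locale maxid =
  fixes M :: "('n::finite) fn set"
  assumes id: "pideal M" and one: "(\<lambda>x. 1) \<notin> M"
    and max: "\<And>M'. pideal M' \<Longrightarrow> M \<subseteq> M' \<Longrightarrow> (\<lambda>x. 1) \<notin> M' \<Longrightarrow> M' = M"
begin

lemma inverse_mod:
  assumes f: "f \<in> poly_fun" "f \<notin> M"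
  shows "\<exists>r\<in>poly_fun. (\<lambda>x. r x * f x - 1) \<in> M"
proof -
  define M' where "M' = {g. \<exists>m\<in>M. \<exists>r\<in>poly_fun. g = (\<lambda>x. m x + r x * f x)}"
  have MP: "M \<subseteq> poly_fun" using pidealD(1)[OF id] .
  have "pideal M'"
    unfolding pideal_def
  proof (intro conjI ballI)
    show "M' \<subseteq> poly_fun" using MP f(1) by (auto simp: M'_def intro!: poly_fun.add poly_fun.mult)
    show "(\<lambda>x. 0) \<in> M'" unfolding M'_def
      by (intro CollectI bexI[OF _ pidealD(2)[OF id]] bexI[OF _ poly_fun.const[of 0]]) (auto simp: id)
    show "(\<lambda>x. p x + q x) \<in> M'" if "p \<in> M'" "q \<in> M'" for p q
    proof -
      from that(1) obtain m1 r1 where "m1 \<in> M" "r1 \<in> poly_fun" "p = (\<lambda>x. m1 x + r1 x * f x)"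
        unfolding M'_def by blast
      moreover from that(2) obtain m2 r2 where "m2 \<in> M" "r2 \<in> poly_fun" "q = (\<lambda>x. m2 x + r2 x * f x)"
        unfolding M'_def by blast
      ultimately show ?thesis unfolding M'_def
        by (intro CollectI bexI[OF _ pidealD(3)[OF id, of m1 m2]] bexI[OF _ poly_fun.add[of r1 r2]])
           (auto simp: algebra_simps)
    qed
    show "(\<lambda>x. p x * q x) \<in> M'" if "p \<in> poly_fun" "q \<in> M'" for p q
    proof -
      from that(2) obtain m1 r1 where "m1 \<in> M" "r1 \<in> poly_fun" "q = (\<lambda>x. m1 x + r1 x * f x)"
        unfolding M'_def by blast
      then show ?thesis unfolding M'_def using that(1)
        by (intro CollectI bexI[OF _ pidealD(4)[OF id, of p m1]] bexI[OF _ poly_fun.mult[of p r1]])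
           (auto simp: algebra_simps)
    qed
  qed
  moreover have "M \<subseteq> M'" unfolding M'_def
    by (auto intro!: bexI[OF _ poly_fun.const[of 0]])
  moreover have "f \<in> M'" unfolding M'_def
    by (intro CollectI bexI[OF _ pidealD(2)[OF id]] bexI[OF _ poly_fun.const[of 1]]) auto
  ultimately have "(\<lambda>x. 1) \<in> M'" using max f(2) by blast
  then obtain m r where mr: "m \<in> M" "r \<in> poly_fun" "(\<lambda>x. 1) = (\<lambda>x. m x + r x * f x)"
    by (auto simp: M'_def)
  have "(\<lambda>x. (-1) * m x) \<in> M" using pideal_smult[OF id mr(1)] .
  moreover have "\<And>x. r x * f x - 1 = (-1) * m x" using mr(3) by (simp add: fun_eq_iff) (metis add_diff_cancel_right' diff_add_cancel minus_diff_eq)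
  ultimately show ?thesis using mr(2) by (intro bexI[of _ r]) (auto intro: pideal_eq)
qed

lemma prime:
  assumes "p \<in> poly_fun" "q \<in> poly_fun" "(\<lambda>x. p x * q x) \<in> M" "p \<notin> M"
  shows "q \<in> M"
proof -
  obtain r where r: "r \<in> poly_fun" "(\<lambda>x. r x * p x - 1) \<in> M" using inverse_mod assms by blast
  have a: "(\<lambda>x. r x * (p x * q x)) \<in> M" by (rule pidealD(4)[OF id r(1) assms(3)])
  have b: "(\<lambda>x. q x * (r x * p x - 1)) \<in> M" by (rule pidealD(4)[OF id assms(2) r(2)])
  show ?thesis using pideal_diff[OF id a b] by (rule pideal_eq) (simp add: algebra_simps)
qed

lemma const_notin: "c \<noteq> 0 \<Longrightarrow> (\<lambda>x. c) \<notin> M"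
  using pideal_smult[OF id, of "\<lambda>x. c" "1/c"] one by auto

lemma root:
  fixes qp :: "complex poly"
  assumes "qp \<noteq> 0" "(\<lambda>x. poly qp (x i)) \<in> M"
  shows "\<exists>c. (\<lambda>x. x i - c) \<in> M"
  using assms
proof (induction "degree qp" arbitrary: qp rule: less_induct)
  case less
  show ?case
  proof (cases "degree qp = 0")
    case True
    then obtain k where "qp = [:k:]" by (meson degree_eq_zeroE)
    then show ?thesis using less const_notin by auto
  next
    case False
    have "\<exists>z. poly qp z = 0"
      by (rule fundamental_theorem_of_algebra_alt) (use False in auto)
    then obtain z where "poly qp z = 0" by blast
    then obtain q' where q': "qp = [:-z, 1:] * q'" by (auto simp: poly_eq_0_iff_dvd dvd_def)
    have q'0: "q' \<noteq> 0" using less(2) q' by auto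
    have "degree qp = degree [:-z, 1:] + degree q'" unfolding q' by (rule degree_mult_eq) (use q'0 in auto)
    then have dq: "degree q' < degree qp" by simp
    have pq: "(\<lambda>x. (x i - z) * poly q' (x i)) \<in> M"
      using less(3) q' by (simp add: algebra_simps)
    have polq: "(\<lambda>x. poly q' (x i)) \<in> poly_fun"
    proof -
      have "(\<lambda>t. poly p t) \<circ> (\<lambda>x. x i) \<in> poly_fun" for p :: "complex poly"
        by (induction p) (auto simp: o_def intro!: poly_fun.intros)
      then show ?thesis by (simp add: o_def)
    qed
    show ?thesis
    proof (cases "(\<lambda>x. x i - z) \<in> M")
      case True then show ?thesis by blast
    next
      case False
      have "(\<lambda>x. poly q' (x i)) \<in> M"
        by (rule prime[OF _ polq pq False]) (auto intro: poly_fun_diff poly_fun.coord poly_fun.const)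
      then show ?thesis using less(1)[OF dq q'0] by blast
    qed
  qed
qed

end



definition fscale :: "complex \<Rightarrow> ('a \<Rightarrow> complex) \<Rightarrow> ('a \<Rightarrow> complex)" where
  "fscale c f = (\<lambda>x. c * f x)"

interpretation fvs: vector_space fscale
  by unfold_locales (auto simp: fscale_def fun_eq_iff algebra_simps)

lemma sum_fun_apply: "(sum f A) x = (\<Sum>a\<in>A. f a x)"
  by (induction A rule: infinite_finite_induct) auto

definition monom_f :: "('n::finite \<Rightarrow> nat) \<Rightarrow> 'n fn" where
  "monom_f a = (\<lambda>x. \<Prod>i\<in>UNIV. x i ^ a i)"

lemma monom_f_mult: "(\<lambda>x. monom_f a x * monom_f b x) = monom_f (\<lambda>i. a i + b i)"
  by (simp add: monom_f_def power_add prod.distrib)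

lemma span_mult_monom:
  assumes "q \<in> fvs.span (range monom_f)"
  shows "(\<lambda>x. monom_f a x * q x) \<in> fvs.span (range monom_f)"
  using assms
proof (induction rule: fvs.span_induct)
  case base
  show ?case unfolding fvs.subspace_def
  proof (intro conjI allI ballI, goal_cases)
    case 1 show ?case using fvs.span_zero by (simp add: zero_fun_def)
  next
    case (2 x y) then show ?case using fvs.span_add[of _ "range monom_f"]
      by (simp add: plus_fun_def distrib_left)
  next
    case (3 c x) then show ?case using fvs.span_scale[of _ "range monom_f" c]
      by (simp add: fscale_def mult.left_commute)
  qed
next
  case (step x)
  then obtain b where "x = monom_f b" by auto
  then show ?case using monom_f_mult[of a b] by (auto intro: fvs.span_base)
qed

lemma span_mult:
  assumes p: "p \<in> fvs.span (range monom_f)" and q: "q \<in> fvs.span (range monom_f)"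
  shows "(\<lambda>x. p x * q x) \<in> fvs.span (range monom_f)"
  using p
proof (induction rule: fvs.span_induct)
  case base
  show ?case unfolding fvs.subspace_def
  proof (intro conjI allI ballI, goal_cases)
    case 1 show ?case using fvs.span_zero by (simp add: zero_fun_def)
  next
    case (2 x y) then show ?case using fvs.span_add[of _ "range monom_f"]
      by (simp add: plus_fun_def distrib_right)
  next
    case (3 c x) then show ?case using fvs.span_scale[of _ "range monom_f" c]
      by (simp add: fscale_def mult.assoc)
  qed
next
  case (step x)
  then obtain a where "x = monom_f a" by auto
  then show ?case using span_mult_monom[OF q] by auto
qed

lemma poly_span: "p \<in> poly_fun \<Longrightarrow> p \<in> fvs.span (range monom_f)"
proof (induction rule: poly_fun.induct)
  case (const c)
  have "monom_f (\<lambda>i::'a. 0) = (\<lambda>x. 1)" by (simp add: monom_f_def)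
  then have "(\<lambda>x::'a pt. 1) \<in> fvs.span (range (monom_f :: ('a \<Rightarrow> nat) \<Rightarrow> 'a fn))" using fvs.span_base[OF rangeI[of monom_f "\<lambda>i::'a. 0"]] by simp
  moreover have "fscale c (\<lambda>x::'a pt. 1) = (\<lambda>x. c)" by (simp add: fscale_def)
  ultimately show ?case using fvs.span_scale[of "\<lambda>x::'a pt. 1" "range monom_f" c] by simp
next
  case (coord i)
  have "monom_f (\<lambda>j. if j = i then 1 else 0) = (\<lambda>x. x i)"
  proof (rule ext)
    fix x :: "'a pt"
    have "(\<Prod>j\<in>UNIV. x j ^ (if j = i then 1 else 0)) = (\<Prod>j\<in>UNIV. if j = i then x j else 1)"
      by (intro prod.cong) auto
    then show "monom_f (\<lambda>j. if j = i then 1 else 0) x = x i" by (simp add: monom_f_def)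
  qed
  then show ?case using fvs.span_base[OF rangeI[of monom_f "\<lambda>j. if j = i then 1 else 0"]] by simp
next
  case (add p q) then show ?case using fvs.span_add[of p _ q] by (simp add: plus_fun_def)
next
  case (mult p q) show ?case by (rule span_mult[OF mult.IH])
qed

definition En :: "nat \<Rightarrow> ('n::finite) fn set" where
  "En n = fvs.span (monom_f ` (from_nat_into (UNIV :: ('n \<Rightarrow> nat) set) ` {..<n}))"

lemma En_mono: "m \<le> n \<Longrightarrow> En m \<subseteq> En n"
  unfolding En_def by (intro fvs.span_mono image_mono) auto

lemma span_En: "p \<in> fvs.span (range monom_f) \<Longrightarrow> \<exists>n. p \<in> (En n :: ('n::finite) fn set)"
proof (induction rule: fvs.span_induct)
  case base
  show ?case unfolding fvs.subspace_def
  proof (intro conjI allI ballI, goal_cases)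
    case 1 show ?case using fvs.span_zero unfolding En_def by blast
  next
    case (2 x y)
    then obtain a b where "x \<in> En a" "y \<in> En b" by auto
    then have "x \<in> En (max a b)" "y \<in> En (max a b)" using En_mono[of a "max a b"] En_mono[of b "max a b"] by auto
    then show ?case unfolding En_def using fvs.span_add by blast
  next
    case (3 c x)
    then obtain a where "x \<in> En a" by auto
    then show ?case unfolding En_def using fvs.span_scale by blast
  qed
next
  case (step x)
  then obtain a where a: "x = monom_f a" by auto
  obtain n where "from_nat_into (UNIV :: ('n \<Rightarrow> nat) set) n = a"
    using from_nat_into_surj[of UNIV a] by (auto intro: countableI_type)
  then have "x \<in> En (Suc n)" unfolding En_def a by (intro fvs.span_base) auto
  then show ?case by blast
qed

context maxid begin

lemma coord_root: "\<exists>c. (\<lambda>x. x i - c) \<in> M"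
proof (rule ccontr)
  assume nc: "\<not> (\<exists>c. (\<lambda>x. x i - c) \<in> M)"
  have xc: "(\<lambda>x. x i - c) \<in> poly_fun" for c by (intro poly_fun_diff poly_fun.coord poly_fun.const)
  have "\<forall>c. \<exists>r\<in>poly_fun. (\<lambda>x. r x * (x i - c) - 1) \<in> M"
    using inverse_mod[OF xc] nc by blast
  then obtain r where r: "\<And>c. r c \<in> poly_fun" "\<And>c. (\<lambda>x. r c x * (x i - c) - 1) \<in> M" by metis
  have rinj: "inj r"
  proof (rule injI, rule ccontr)
    fix c1 c2 assume e: "r c1 = r c2" "c1 \<noteq> c2"
    have "(\<lambda>x. (r c1 x * (x i - c1) - 1) - (r c2 x * (x i - c2) - 1)) \<in> M"
      by (rule pideal_diff[OF id r(2) r(2)])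
    then have "(\<lambda>x. (1 / (c2 - c1)) * ((r c1 x * (x i - c1) - 1) - (r c2 x * (x i - c2) - 1))) \<in> M"
      by (rule pideal_smult[OF id])
    moreover have "(\<lambda>x. (1 / (c2 - c1)) * ((r c1 x * (x i - c1) - 1) - (r c2 x * (x i - c2) - 1))) = r c1"
      using e by (auto simp: fun_eq_iff field_simps)
    ultimately have "r c1 \<in> M" by simp
    then have "(\<lambda>x. (x i - c1) * r c1 x) \<in> M" by (rule pidealD(4)[OF id xc])
    then have "(\<lambda>x. (x i - c1) * r c1 x - (r c1 x * (x i - c1) - 1)) \<in> M"
      by (rule pideal_diff[OF id _ r(2)])
    then show False using one by (simp add: mult.commute)
  qed
  have "\<forall>c. \<exists>n. r c \<in> En n" using span_En poly_span r(1) by blast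
  then obtain N where N: "\<And>c. r c \<in> En (N c)" by metis
  have "\<exists>n. infinite (N -` {n})"
  proof (rule ccontr)
    assume "\<not> (\<exists>n. infinite (N -` {n}))"
    then have "countable (\<Union>n. N -` {n})" by (auto intro: countable_finite)
    moreover have "(\<Union>n. N -` {n}) = UNIV" by auto
    ultimately show False using uncountable_UNIV_complex by simp
  qed
  then obtain n where n: "infinite (N -` {n})" by blast
  define T where "T = r ` (N -` {n})"
  have Tinf: "infinite T" unfolding T_def using n finite_imageD[of r "N -` {n}"] rinj
    by (auto simp: inj_on_def inj_def)
  have TE: "T \<subseteq> fvs.span (monom_f ` (from_nat_into (UNIV :: ('n \<Rightarrow> nat) set) ` {..<n}))"
    using N unfolding T_def En_def by auto
  have "fvs.dependent T"
    using fvs.independent_span_bound[OF _ _ TE] Tinf by auto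
  then obtain t u where t: "finite t" "t \<subseteq> T" "(\<Sum>v\<in>t. fscale (u v) v) = 0" "\<exists>v\<in>t. u v \<noteq> 0"
    unfolding fvs.dependent_explicit by blast
  define C where "C = r -` t"
  have fC: "finite C" unfolding C_def using t(1) rinj by (simp add: finite_vimageI)
  have tC: "t = r ` C" using t(2) unfolding C_def T_def by auto
  define a where "a c = u (r c)" for c
  have sum0: "(\<Sum>c\<in>C. a c * r c x) = 0" for x
  proof -
    have "(\<Sum>v\<in>t. fscale (u v) v) x = 0" using t(3) by simp
    then have "(\<Sum>v\<in>t. u v * v x) = 0" by (simp add: sum_fun_apply fscale_def)
    then show ?thesis unfolding tC a_def
      by (simp add: sum.reindex inj_on_subset[OF rinj subset_UNIV])
  qed
  obtain c0 where c0: "c0 \<in> C" "a c0 \<noteq> 0" using t(4) unfolding tC a_def by auto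
  define qp where "qp = (\<Sum>c\<in>C. smult (a c) (\<Prod>c'\<in>C - {c}. [:-c', 1:]))"
  have qpoly: "poly qp t' = (\<Sum>c\<in>C. a c * (\<Prod>c'\<in>C - {c}. t' - c'))" for t'
    by (simp add: qp_def poly_sum poly_prod)
  have "poly qp c0 \<noteq> 0"
  proof -
    have "poly qp c0 = a c0 * (\<Prod>c'\<in>C - {c0}. c0 - c') + (\<Sum>c\<in>C - {c0}. a c * (\<Prod>c'\<in>C - {c}. c0 - c'))"
      unfolding qpoly using sum.remove[OF fC c0(1)] by simp
    also have "(\<Sum>c\<in>C - {c0}. a c * (\<Prod>c'\<in>C - {c}. c0 - c')) = 0"
    proof (intro sum.neutral ballI)
      fix c assume "c \<in> C - {c0}"
      then have "c0 \<in> C - {c}" using c0 by auto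
      then have "(\<Prod>c'\<in>C - {c}. c0 - c') = 0" using fC by (intro prod_zero) auto
      then show "a c * (\<Prod>c'\<in>C - {c}. c0 - c') = 0" by simp
    qed
    finally show ?thesis using c0(2) fC by simp
  qed
  then have qp0: "qp \<noteq> 0" by auto
  have m1: "(\<lambda>x. - (\<Sum>c\<in>C. (a c * (\<Prod>c'\<in>C - {c}. x i - c')) * (r c x * (x i - c) - 1))) \<in> M"
  proof -
    have pc: "(\<lambda>x. a c * (\<Prod>c'\<in>C - {c}. x i - c')) \<in> poly_fun" for c
      using fC by (intro poly_fun_smult poly_fun_prod xc) auto
    have "(\<lambda>x. \<Sum>c\<in>C. (a c * (\<Prod>c'\<in>C - {c}. x i - c')) * (r c x * (x i - c) - 1)) \<in> M"
      by (intro pideal_sum[OF id fC] pidealD(4)[OF id pc r(2)])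
    from pideal_smult[OF id this, of "-1"] show ?thesis by simp
  qed
  have m2: "- (\<Sum>c\<in>C. (a c * (\<Prod>c'\<in>C - {c}. x i - c')) * (r c x * (x i - c) - 1)) = poly qp (x i)" for x
  proof -
    have pr: "(\<Prod>c'\<in>C - {c}. x i - c') * (x i - c) = (\<Prod>c'\<in>C. x i - c')" if "c \<in> C" for c
      using prod.remove[OF fC that, of "\<lambda>c'. x i - c'"] by (simp add: mult.commute)
    have "(\<Sum>c\<in>C. (a c * (\<Prod>c'\<in>C - {c}. x i - c')) * (r c x * (x i - c) - 1)) =
          (\<Sum>c\<in>C. (\<Prod>c'\<in>C. x i - c') * (a c * r c x)) - (\<Sum>c\<in>C. a c * (\<Prod>c'\<in>C - {c}. x i - c'))"
      by (simp add: sum_subtractf[symmetric] algebra_simps pr cong: sum.cong)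
        (intro sum.cong refl, simp add: pr[symmetric] algebra_simps)
    also have "\<dots> = - poly qp (x i)"
      using sum0[of x] by (simp add: qpoly sum_distrib_left[symmetric])
    finally show ?thesis by simp
  qed
  have "(\<lambda>x. poly qp (x i)) \<in> M" by (rule pideal_eq[OF m1]) (rule m2[symmetric])
  from root[OF qp0 this] nc show False by blast
qed

end



context maxid begin

definition cpt :: "'n pt" where "cpt = (\<lambda>i. SOME c. (\<lambda>x. x i - c) \<in> M)"

lemma cpt_in: "(\<lambda>x. x i - cpt i) \<in> M"
  unfolding cpt_def using someI_ex[OF coord_root[of i]] by simp

lemma eval_point: "p \<in> poly_fun \<Longrightarrow> (\<lambda>x. p x - p cpt) \<in> M"
proof (induction rule: poly_fun.induct)
  case (const c) then show ?case using pidealD(2)[OF id] by simp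
next
  case (coord i) then show ?case using cpt_in by simp
next
  case (add p q)
  show ?case using pidealD(3)[OF id add.IH] by (rule pideal_eq) (simp add: algebra_simps)
next
  case (mult p q)
  have a: "(\<lambda>x. p x * (q x - q cpt)) \<in> M" by (rule pidealD(4)[OF id mult.hyps(1) mult.IH(2)])
  have b: "(\<lambda>x. q cpt * (p x - p cpt)) \<in> M" by (rule pideal_smult[OF id mult.IH(1)])
  show ?case using pidealD(3)[OF id a b] by (rule pideal_eq) (simp add: algebra_simps)
qed

end

lemma weak_null:
  fixes J :: "('n::finite) fn set"
  assumes J: "pideal J" "(\<lambda>x. 1) \<notin> J"
  shows "\<exists>z. \<forall>f\<in>J. f z = 0"
proof -
  obtain M where M: "pideal M" "J \<subseteq> M" "(\<lambda>x. 1) \<notin> M"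
    "\<forall>M'. pideal M' \<and> M \<subseteq> M' \<and> (\<lambda>x. 1) \<notin> M' \<longrightarrow> M' = M"
    using maximal_ideal_exists[OF J] by blast
  interpret maxid M using M by unfold_locales auto
  show ?thesis
  proof (intro exI ballI)
    fix f assume f: "f \<in> J"
    then have fM: "f \<in> M" "f \<in> poly_fun" using M(2) pidealD(1)[OF J(1)] by auto
    have "(\<lambda>x. f x - (f x - f cpt)) \<in> M" by (rule pideal_diff[OF id fM(1) eval_point[OF fM(2)]])
    then have "(\<lambda>x. f cpt) \<in> M" by simp
    then show "f cpt = 0" using const_notin by blast
  qed
qed

lemma cover:
  fixes X :: "('n::finite) pt set"
  assumes alg: "algebraic_set X" and g: "\<And>y. y \<in> X \<Longrightarrow> g y \<in> poly_fun" "\<And>y. y \<in> X \<Longrightarrow> g y y \<noteq> 0"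
  shows "\<exists>S a. finite S \<and> S \<subseteq> X \<and> (\<forall>s. a s \<in> poly_fun) \<and> (\<forall>x\<in>X. (\<Sum>s\<in>S. a s x * g s x) = 1)"
proof (rule ccontr)
  assume nc: "\<not> ?thesis"
  define J where "J = {h \<in> poly_fun. \<exists>S a. finite S \<and> S \<subseteq> X \<and> (\<forall>s. a s \<in> poly_fun) \<and>
      (\<forall>x\<in>X. h x = (\<Sum>s\<in>S. a s x * g s x))}"
  have zero: "(\<lambda>x. 0) \<in> J" unfolding J_def
    by (intro CollectI conjI poly_fun.const exI[of _ "{}"] exI[of _ "\<lambda>s x. 0"]) (auto intro: poly_fun.const)
  have pJ: "pideal J"
    unfolding pideal_def
  proof (intro conjI ballI)
    show "J \<subseteq> poly_fun" by (auto simp: J_def)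
    show "(\<lambda>x. 0) \<in> J" by (rule zero)
    show "(\<lambda>x. p x + q x) \<in> J" if "p \<in> J" "q \<in> J" for p q
    proof -
      from that(1) obtain S1 a1 where 1: "p \<in> poly_fun" "finite S1" "S1 \<subseteq> X" "\<forall>s. a1 s \<in> poly_fun"
        "\<forall>x\<in>X. p x = (\<Sum>s\<in>S1. a1 s x * g s x)" unfolding J_def by blast
      from that(2) obtain S2 a2 where 2: "q \<in> poly_fun" "finite S2" "S2 \<subseteq> X" "\<forall>s. a2 s \<in> poly_fun"
        "\<forall>x\<in>X. q x = (\<Sum>s\<in>S2. a2 s x * g s x)" unfolding J_def by blast
      define a where "a s = (\<lambda>x. (if s \<in> S1 then a1 s x else 0) + (if s \<in> S2 then a2 s x else 0))" for s
      have ap: "a s \<in> poly_fun" for s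
        using 1(4) 2(4) by (cases "s \<in> S1"; cases "s \<in> S2") (auto simp: a_def intro!: poly_fun.add poly_fun.const)
      have "(\<lambda>x. p x + q x) x = (\<Sum>s\<in>S1 \<union> S2. a s x * g s x)" if x: "x \<in> X" for x
      proof -
        have "(\<Sum>s\<in>S1 \<union> S2. a s x * g s x) =
            (\<Sum>s\<in>S1 \<union> S2. if s \<in> S1 then a1 s x * g s x else 0) + (\<Sum>s\<in>S1 \<union> S2. if s \<in> S2 then a2 s x * g s x else 0)"
          by (subst sum.distrib[symmetric], intro sum.cong refl) (auto simp: a_def algebra_simps)
        also have "\<dots> = (\<Sum>s\<in>S1. a1 s x * g s x) + (\<Sum>s\<in>S2. a2 s x * g s x)"
          using 1(2) 2(2) sum.inter_restrict[of "S1 \<union> S2" "\<lambda>s. a1 s x * g s x" S1]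
            sum.inter_restrict[of "S1 \<union> S2" "\<lambda>s. a2 s x * g s x" S2]
          by (simp add: Int_absorb1 Int_absorb2)
        finally show ?thesis using 1(5) 2(5) x by simp
      qed
      then show ?thesis unfolding J_def using 1 2 ap
        by (intro CollectI conjI poly_fun.add exI[of _ "S1 \<union> S2"] exI[of _ a]) auto
    qed
    show "(\<lambda>x. p x * q x) \<in> J" if "p \<in> poly_fun" "q \<in> J" for p q
    proof -
      from that(2) obtain S1 a1 where 1: "q \<in> poly_fun" "finite S1" "S1 \<subseteq> X" "\<forall>s. a1 s \<in> poly_fun"
        "\<forall>x\<in>X. q x = (\<Sum>s\<in>S1. a1 s x * g s x)" unfolding J_def by blast
      show ?thesis unfolding J_def using 1 that(1)
        by (intro CollectI conjI poly_fun.mult exI[of _ S1] exI[of _ "\<lambda>s x. p x * a1 s x"])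
           (auto intro: poly_fun.mult simp: sum_distrib_left mult.assoc)
    qed
  qed
  have one: "(\<lambda>x. 1) \<notin> J"
  proof
    assume "(\<lambda>x. 1) \<in> J"
    then obtain S a where h: "finite S" "S \<subseteq> X" "\<forall>s. a s \<in> poly_fun" "\<forall>x\<in>X. 1 = (\<Sum>s\<in>S. a s x * g s x)"
      unfolding J_def by blast
    from h(4) have "\<forall>x\<in>X. (\<Sum>s\<in>S. a s x * g s x) = 1" by simp
    with h(1-3) have "\<exists>S a. finite S \<and> S \<subseteq> X \<and> (\<forall>s. a s \<in> poly_fun) \<and> (\<forall>x\<in>X. (\<Sum>s\<in>S. a s x * g s x) = 1)"
      by blast
    then show False using nc by blast
  qed
  obtain z where z: "\<forall>f\<in>J. f z = 0" using weak_null[OF pJ one] by blast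
  obtain Fs where Fs: "Fs \<subseteq> poly_fun" "X = {x. \<forall>f\<in>Fs. f x = 0}" using alg by (auto simp: algebraic_set_def)
  have "f z = 0" if "f \<in> Fs" for f
  proof -
    have "f \<in> J" unfolding J_def using that Fs
      by (intro CollectI conjI exI[of _ "{}"] exI[of _ "\<lambda>s x. 0"]) (auto intro: poly_fun.const)
    then show ?thesis using z by blast
  qed
  then have zX: "z \<in> X" using Fs(2) by blast
  have "g z \<in> J" unfolding J_def using g(1)[OF zX] zX
    by (intro CollectI conjI exI[of _ "{z}"] exI[of _ "\<lambda>s x. 1"]) (auto intro: poly_fun.const)
  then show False using z g(2)[OF zX] by blast
qed

theorem theorem2p20:
  fixes X :: "('n::finite) pt set" and L :: "'n vfield set" and x0 :: "'n pt"
  assumes "algebraic_set X"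
    and "transitive_Aut X"
    and "submodule_VF X L"
    and "L \<subseteq> Lie_alg X"
    and "x0 \<in> X"
    and "\<exists>F. F \<subseteq> {(\<lambda>i. \<nu> i x0) | \<nu>. \<nu> \<in> L} \<and> generating_subset X x0 F"
  shows "algebraic_density_property X"
proof -
  obtain F where F: "F \<subseteq> {(\<lambda>i. \<nu> i x0) | \<nu>. \<nu> \<in> L}" "generating_subset X x0 F" using assms(6) by blast
  have "VF X \<subseteq> Lie_alg X"
  proof
    fix v assume v: "v \<in> VF X"
    have "\<forall>y\<in>X. \<exists>d. d \<in> poly_fun \<and> d y \<noteq> 0 \<and> (\<lambda>i x. (if x \<in> X then d x else 0) * v i x) \<in> Mset X L"
      using local_gen[OF assms(3) assms(2) assms(5) F v] by blast
    from bchoice[OF this] obtain g where g0: "\<forall>y\<in>X. g y \<in> poly_fun \<and> g y y \<noteq> 0 \<and>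
        (\<lambda>i x. (if x \<in> X then g y x else 0) * v i x) \<in> Mset X L" by blast
    have g: "\<And>y. y \<in> X \<Longrightarrow> g y \<in> poly_fun" "\<And>y. y \<in> X \<Longrightarrow> g y y \<noteq> 0"
      "\<And>y. y \<in> X \<Longrightarrow> (\<lambda>i x. (if x \<in> X then g y x else 0) * v i x) \<in> Mset X L"
      using g0 by auto
    obtain S a where Sa: "finite S" "S \<subseteq> X" "\<forall>s. a s \<in> poly_fun" "\<forall>x\<in>X. (\<Sum>s\<in>S. a s x * g s x) = 1"
      using cover[OF assms(1) g(1,2)] by blast
    define m where "m = (\<lambda>i x. \<Sum>s\<in>S. (if x \<in> X then a s x else 0) * ((if x \<in> X then g s x else 0) * v i x))"
    have "m \<in> Mset X L" unfolding m_def
      using Sa by (intro Mset_sum Mset_rmult[OF assms(3)] regI g(3)) auto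
    moreover have "m = v"
    proof (intro ext)
      fix i x show "m i x = v i x"
      proof (cases "x \<in> X")
        case True
        then have "m i x = (\<Sum>s\<in>S. a s x * (g s x * v i x))"
          by (simp add: m_def)
        also have "\<dots> = (\<Sum>s\<in>S. a s x * g s x) * v i x"
          by (simp add: sum_distrib_right mult.assoc)
        finally have "m i x = (\<Sum>s\<in>S. a s x * g s x) * v i x" .
        then show ?thesis using Sa(4) True by simp
      next
        case False then show ?thesis using VF_out[OF v False] by (simp add: m_def)
      qed
    qed
    ultimately show "v \<in> Lie_alg X" using Mset_Lie[OF assms(3) assms(4)] by simp
  qed
  then show ?thesis using Lie_VF unfolding algebraic_density_property_def by blast
qed


end
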